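(* Let $K, G : \mathrm{Per}(\mathbb{R}) \to \mathrm{Per}(\mathbb{R})$ be continuous mappings which can be approximated smoothly by the parameterized families $K_N$ and $G_N$, respectively (in the sense defined in the context). Let $\lambda \geq 0$ be any real number. Define $KG$, $K+G$, $\lambda K$ by $((KG)(\rho))(x) = (K(\rho))(x)\,(G(\rho))(x)$, $((K+G)(\rho))(x) = (K(\rho))(x) + (G(\rho))(x)$, $((\lambda K)(\rho))(x) = \lambda (K(\rho))(x)$ for all $x \in \mathbb{R}$, $\rho \in \mathrm{Per}(\mathbb{R})$. Then $KG$, $K+G$, $\lambda K$ can be approximated smoothly by the parameterized families $K_N G_N$, $K_N + G_N$, $\lambda K_N$, respectively (where $(K_NG_N)(\rho)=K_N(\rho)G_N(\rho)$ etc. for $\rho\in\mathbb{R}^N$).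
   Context: $\mathbb{R}_+ = [0,+\infty)$. $\mathrm{Per}(\mathbb{R})$ denotes the set of continuous, positive functions $\rho:\mathbb{R}\to(0,+\infty)$ that are periodic with period $1$; continuity of maps on $\mathrm{Per}(\mathbb{R})$ is with respect to the uniform (sup) metric. For $y \in \mathbb{R}^N$, $|y|_\infty = \max_i |y_i|$; for $x,y\in\mathbb{R}^N$, $x \le y$ means componentwise; $1_N = (1,\dots,1)^\top$. For $\rho = (\rho_0,\dots,\rho_{N-1})^\top \in \mathbb{R}^N$ and $i=1,\dots,N-1$, $\rho^{(i)} = (\rho_i,\dots,\rho_{N-1},\rho_0,\dots,\rho_{i-1})^\top$, $\rho^{(0)}=\rho$, and in general $\rho^{(k)}$ is obtained by applying the cyclic left shift $k$ times. For $h=1/N$ and $\rho\in\mathbb{R}^N$, $P_N\rho \in \mathrm{Per}(\mathbb{R})$ (for positive $\rho$) is the $1$-periodic function with $(P_N\rho)(x) = h^{-1}\rho_i((i+1)h - x) + h^{-1}\rho_{i+1}(x - ih)$ for $x \in [ih,(i+1)h]$, $i=0,\dots,N-2$, and $(P_N\rho)(x) = h^{-1}\rho_{N-1}(1-x) + h^{-1}\rho_0(x+h-1)$ for $x\in[(N-1)h,1]$ (piecewise linear interpolation of the values $\rho_i$ at the nodes $ih$). Definition (smooth approximation). Let $K:\mathrm{Per}(\mathbb{R})\to\mathrm{Per}(\mathbb{R})$ be continuous and suppose there is $v_{\max}>0$ with $0 \le (K(\rho))(x) \le v_{\max}$ for all $x\in\mathbb{R}$, $\rho \in \mathrm{Per}(\mathbb{R})$.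 A family of mappings $K_N:\mathbb{R}^N\to\mathbb{R}_+$, indexed by integers $N>2$, smoothly approximates $K$ if there exist constants $L,c,C,S\ge 0$ and non-decreasing functions $\gamma,\Gamma,W:\mathbb{R}_+\to\mathbb{R}_+$ such that $K_N(\rho)\le v_{\max}$ for all $\rho\in\mathbb{R}_+^N$, and for all $N>2$, $0<\rho_{\min}\le\rho_{\max}$, $i=0,\dots,N-1$ and all $\rho=(\rho_0,\dots,\rho_{N-1})^\top,\tilde\rho \in\mathbb{R}_+^N$ with $\rho_{\min}1_N\le\rho\le\rho_{\max}1_N$, $\rho_{\min}1_N\le\tilde\rho\le\rho_{\max}1_N$, writing $h=1/N$, $y = h^{-1}(\rho^{(1)}-\rho)$, $\varphi = h^{-2}(\rho^{(2)}-2\rho^{(1)}+\rho)$: (i) $|K_N(\rho)-K_N(\tilde\rho)| \le L|\rho-\tilde\rho|_\infty$; (ii) $|K_N(\rho)-K_N(\rho^{(1)})-K_N(\tilde\rho)+K_N(\tilde\rho^{(1)})| \le (h|\rho-\tilde\rho|_\infty + h^2)\Gamma(\rho_{\max})$; (iii) $-ch(\rho_{\max}-\rho_0) \le K_N(\rho^{(1)})-K_N(\rho) \le ch(\rho_0-\rho_{\min})$; (iv) $|2K_N(\rho^{(1)})-K_N(\rho)-K_N(\rho^{(2)})| \le h^2(\gamma(\rho_{\max}) + C|y|_\infty)$; (v) $|3K_N(\rho^{(1)})+K_N(\rho^{(3)})-K_N(\rho)-3K_N(\rho^{(2)})| \le h^3(W(\rho_{\max}+|y|_\infty) + C|\varphi|_\infty)$;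 (vi) $|(K(P_N\rho))(ih) - K_N(\rho^{(i)})| \le hS\rho_{\max}$. *)

theory Defs
  imports "HOL-Analysis.Analysis"
begin

definition Per :: "(real \<Rightarrow> real) set" where
  "Per = {\<rho>. continuous_on UNIV \<rho> \<and> (\<forall>x. \<rho> x > 0) \<and> (\<forall>x. \<rho> (x + 1) = \<rho> x)}"

definition sup_continuous_on_Per :: "((real \<Rightarrow> real) \<Rightarrow> (real \<Rightarrow> real)) \<Rightarrow> bool" where
  "sup_continuous_on_Per K \<longleftrightarrow>
     (\<forall>\<rho>\<in>Per. \<forall>\<epsilon>>0. \<exists>\<delta>>0. \<forall>\<sigma>\<in>Per.
        (\<forall>x. \<bar>\<rho> x - \<sigma> x\<bar> \<le> \<delta>) \<longrightarrow> (\<forall>x. \<bar>K \<rho> x - K \<sigma> x\<bar> \<le> \<epsilon>))"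

text \<open>Vectors in R^N are real lists of length N; entry i is xs ! i.
  The sup norm |y|_inf = max_i |y_i|.\<close>
definition linf :: "real list \<Rightarrow> real" where
  "linf xs = Max (set (map abs xs))"

text \<open>Piecewise linear periodic interpolation P_N of the node values rho_i at i/N.\<close>
definition PN :: "nat \<Rightarrow> real list \<Rightarrow> real \<Rightarrow> real" where
  "PN N \<rho> x = (let t = x - of_int \<lfloor>x\<rfloor>; i = nat \<lfloor>t * real N\<rfloor>; s = t * real N - real i
               in (1 - s) * \<rho> ! i + s * \<rho> ! ((i + 1) mod N))"

definition smooth_approx ::
  "((real \<Rightarrow> real) \<Rightarrow> (real \<Rightarrow> real)) \<Rightarrow> (nat \<Rightarrow> real list \<Rightarrow> real) \<Rightarrow> bool" where
  "smooth_approx K KN \<longleftrightarrow>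
    (\<forall>\<rho>\<in>Per. continuous_on UNIV (K \<rho>) \<and> (\<forall>x. K \<rho> (x + 1) = K \<rho> x)) \<and>
    sup_continuous_on_Per K \<and>
    (\<forall>N>2. \<forall>\<rho>. length \<rho> = N \<longrightarrow> 0 \<le> KN N \<rho>) \<and>
    (\<exists>vmax>0. (\<forall>\<rho>\<in>Per. \<forall>x. 0 \<le> K \<rho> x \<and> K \<rho> x \<le> vmax) \<and>
      (\<exists>L c C S \<gamma> \<Gamma> W. L \<ge> 0 \<and> c \<ge> 0 \<and> C \<ge> 0 \<and> S \<ge> 0 \<and>
        (\<forall>t\<ge>0. \<gamma> t \<ge> 0 \<and> \<Gamma> t \<ge> 0 \<and> W t \<ge> 0) \<and>
        mono_on {0..} \<gamma> \<and> mono_on {0..} \<Gamma> \<and> mono_on {0..} W \<and>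
        (\<forall>N>2. \<forall>\<rho>. length \<rho> = N \<and> (\<forall>j<N. \<rho> ! j \<ge> 0) \<longrightarrow> KN N \<rho> \<le> vmax) \<and>
        (\<forall>N>2. \<forall>rmin rmax \<rho> \<rho>'. 0 < rmin \<and> rmin \<le> rmax \<and>
           length \<rho> = N \<and> length \<rho>' = N \<and>
           (\<forall>j<N. rmin \<le> \<rho> ! j \<and> \<rho> ! j \<le> rmax) \<and>
           (\<forall>j<N. rmin \<le> \<rho>' ! j \<and> \<rho>' ! j \<le> rmax) \<longrightarrow>
           (let h = 1 / real N;
                y = map (\<lambda>j. (rotate 1 \<rho> ! j - \<rho> ! j) / h) [0..<N];
                phi = map (\<lambda>j. (rotate 2 \<rho> ! j - 2 * rotate 1 \<rho> ! j + \<rho> ! j) / h\<^sup>2) [0..<N];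
                d = linf (map (\<lambda>j. \<rho> ! j - \<rho>' ! j) [0..<N])
            in
             \<bar>KN N \<rho> - KN N \<rho>'\<bar> \<le> L * d \<and>
             \<bar>KN N \<rho> - KN N (rotate 1 \<rho>) - KN N \<rho>' + KN N (rotate 1 \<rho>')\<bar>
                \<le> (h * d + h\<^sup>2) * \<Gamma> rmax \<and>
             - c * h * (rmax - \<rho> ! 0) \<le> KN N (rotate 1 \<rho>) - KN N \<rho> \<and>
             KN N (rotate 1 \<rho>) - KN N \<rho> \<le> c * h * (\<rho> ! 0 - rmin) \<and>
             \<bar>2 * KN N (rotate 1 \<rho>) - KN N \<rho> - KN N (rotate 2 \<rho>)\<bar>
                \<le> h\<^sup>2 * (\<gamma> rmax + C * linf y) \<and>
             \<bar>3 * KN N (rotate 1 \<rho>) + KN N (rotate 3 \<rho>) - KN N \<rho> - 3 * KN N (rotate 2 \<rho>)\<bar>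
                \<le> h ^ 3 * (W (rmax + linf y) + C * linf phi) \<and>
             (\<forall>i<N. \<bar>K (PN N \<rho>) (real i * h) - KN N (rotate i \<rho>)\<bar> \<le> h * S * rmax)))))"

end

theory Submission
  imports Defs
begin


definition aF :: "nat \<Rightarrow> real list \<Rightarrow> int \<Rightarrow> real" where
  "aF N \<rho> k = \<rho> ! nat (k mod int N)"

definition FF :: "nat \<Rightarrow> real list \<Rightarrow> real \<Rightarrow> real" where
  "FF N \<rho> u = (1 - (u - of_int \<lfloor>u\<rfloor>)) * aF N \<rho> \<lfloor>u\<rfloor> + (u - of_int \<lfloor>u\<rfloor>) * aF N \<rho> (\<lfloor>u\<rfloor> + 1)"

lemma PN_FF:
  assumes "N > 0"
  shows "PN N \<rho> x = FF N \<rho> (real N * x)"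
proof -
  define t where "t = x - of_int \<lfloor>x\<rfloor>"
  define m where "m = \<lfloor>real N * x\<rfloor>"
  have t01: "0 \<le> t" "t < 1" unfolding t_def by (simp_all add: floor_le_iff) linarith
  have tN: "t * real N = real N * x - of_int (int N * \<lfloor>x\<rfloor>)" unfolding t_def by (simp add: algebra_simps)
  have fl: "\<lfloor>t * real N\<rfloor> = m - int N * \<lfloor>x\<rfloor>" unfolding tN m_def by (rule floor_diff_of_int)
  have ge: "0 \<le> \<lfloor>t * real N\<rfloor>" using t01 by simp
  have lt: "\<lfloor>t * real N\<rfloor> < int N"
  proof -
    have "t * real N < real N" using t01 assms by simp
    then show ?thesis by (simp add: floor_less_iff)
  qed
  define i where "i = nat \<lfloor>t * real N\<rfloor>"
  have ii: "int i = m - int N * \<lfloor>x\<rfloor>" using ge fl i_def by simp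
  have ri: "real i = of_int m - real N * of_int \<lfloor>x\<rfloor>"
  proof -
    have "real i = of_int (int i)" by simp
    also have "\<dots> = of_int m - real N * of_int \<lfloor>x\<rfloor>" unfolding ii by simp
    finally show ?thesis .
  qed
  have s: "t * real N - real i = real N * x - of_int m" using tN ri by simp
  have imod: "m mod int N = int i"
  proof -
    have "m mod int N = (int i + int N * \<lfloor>x\<rfloor>) mod int N" using ii by simp
    also have "\<dots> = int i mod int N" by simp
    also have "\<dots> = int i" using ge lt ii fl by (intro mod_pos_pos_trivial) auto
    finally show ?thesis .
  qed
  have i1: "nat (m mod int N) = i" using imod by simp
  have i2: "nat ((m + 1) mod int N) = (i + 1) mod N"
  proof -
    have "(m + 1) mod int N = (m mod int N + 1) mod int N" by (simp add: mod_add_left_eq)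
    also have "\<dots> = int ((i + 1) mod N)" using imod by (simp add: zmod_int add.commute)
    finally show ?thesis by simp
  qed
  show ?thesis unfolding PN_def FF_def aF_def Let_def
    by (simp only: t_def[symmetric] i_def[symmetric] s m_def[symmetric] i1 i2)
qed


definition LL :: "nat \<Rightarrow> real list \<Rightarrow> int \<Rightarrow> real \<Rightarrow> real" where
  "LL N \<rho> j u = (1 - (u - of_int j)) * aF N \<rho> j + (u - of_int j) * aF N \<rho> (j + 1)"

lemma FF_LL: "\<lfloor>u\<rfloor> = j \<Longrightarrow> FF N \<rho> u = LL N \<rho> j u"
  by (simp add: FF_def LL_def)

lemma cont_LL: "continuous_on UNIV (LL N \<rho> j)"
  unfolding LL_def by (intro continuous_intros)

lemma isCont_FF: "isCont (FF N \<rho>) u0"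
proof -
  define k where "k = \<lfloor>u0\<rfloor>"
  define g where "g = (\<lambda>u. if u \<le> of_int k then LL N \<rho> (k - 1) u else LL N \<rho> k u)"
  have cg: "continuous_on UNIV g" unfolding g_def
    by (rule continuous_on_cases_le) (auto intro: continuous_on_subset[OF cont_LL] continuous_intros, simp add: LL_def)
  have ev: "eventually (\<lambda>u. FF N \<rho> u = g u) (nhds u0)"
  proof -
    have pt: "FF N \<rho> u = g u" if u: "u \<in> {real_of_int k - 1<..<real_of_int k + 1}" for u
    proof (cases "u < of_int k")
      case True
      then have "\<lfloor>u\<rfloor> = k - 1" using u by (simp add: floor_eq_iff)
      then show ?thesis using True by (simp add: FF_LL g_def)
    next
      case False
      then have "\<lfloor>u\<rfloor> = k" using u by (simp add: floor_eq_iff)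
      moreover have "u = of_int k \<Longrightarrow> LL N \<rho> (k - 1) u = LL N \<rho> k u" by (simp add: LL_def)
      ultimately show ?thesis using False by (auto simp: FF_LL g_def)
    qed
    have "eventually (\<lambda>u. u \<in> {real_of_int k - 1<..<real_of_int k + 1}) (nhds u0)"
      by (rule eventually_nhds_in_open) (auto simp: k_def, linarith)
    then show ?thesis by (rule eventually_mono) (rule pt)
  qed
  have "isCont g u0" using cg by (simp add: continuous_on_eq_continuous_at)
  then show ?thesis using isCont_cong[OF ev] by simp
qed

lemma aF_pos:
  assumes "N > 0" "length \<rho> = N" "\<forall>j<N. \<rho> ! j > 0"
  shows "aF N \<rho> k > 0"
proof -
  have "nat (k mod int N) < N" using assms(1) by (simp add: nat_less_iff)
  then show ?thesis using assms by (simp add: aF_def)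
qed

lemma FF_pos:
  assumes "N > 0" "length \<rho> = N" "\<forall>j<N. \<rho> ! j > 0"
  shows "FF N \<rho> u > 0"
proof -
  define s where "s = u - of_int \<lfloor>u\<rfloor>"
  have s: "0 \<le> s" "s < 1" unfolding s_def by linarith+
  have a: "aF N \<rho> \<lfloor>u\<rfloor> > 0" "aF N \<rho> (\<lfloor>u\<rfloor> + 1) > 0" using aF_pos[OF assms] by auto
  have "(1 - s) * aF N \<rho> \<lfloor>u\<rfloor> > 0" using s a by simp
  moreover have "s * aF N \<rho> (\<lfloor>u\<rfloor> + 1) \<ge> 0" using s a by simp
  ultimately show ?thesis unfolding FF_def s_def[symmetric] by linarith
qed

lemma FF_per: "FF N \<rho> (u + real N) = FF N \<rho> u"
proof -
  have "\<lfloor>u + real N\<rfloor> = \<lfloor>u\<rfloor> + int N" by (metis floor_add_int of_int_of_nat_eq)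
  moreover have "aF N \<rho> (k + int N) = aF N \<rho> k" for k by (simp add: aF_def)
  ultimately show ?thesis unfolding FF_def by (simp add: add.assoc[symmetric] add.commute[of _ 1])
qed

lemma PN_Per:
  assumes "N > 0" "length \<rho> = N" "\<forall>j<N. \<rho> ! j > 0"
  shows "PN N \<rho> \<in> Per"
proof -
  have eq: "PN N \<rho> = (\<lambda>x. FF N \<rho> (real N * x))" using PN_FF[OF assms(1)] by auto
  have "continuous_on UNIV (PN N \<rho>)" unfolding eq
    by (intro continuous_at_imp_continuous_on ballI continuous_at_compose[of _ "\<lambda>x. real N * x" "FF N \<rho>", unfolded o_def] continuous_intros isCont_FF)
  moreover have "PN N \<rho> x > 0" for x unfolding eq using FF_pos[OF assms] by simp
  moreover have "PN N \<rho> (x + 1) = PN N \<rho> x" for x unfolding eq using FF_per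
    by (simp add: distrib_left)
  ultimately show ?thesis unfolding Per_def by auto
qed



definition inb :: "nat \<Rightarrow> real \<Rightarrow> real \<Rightarrow> real list \<Rightarrow> bool" where
  "inb N rmin rmax \<rho> \<longleftrightarrow> length \<rho> = N \<and> (\<forall>j<N. rmin \<le> \<rho> ! j \<and> \<rho> ! j \<le> rmax)"
definition dv :: "nat \<Rightarrow> real list \<Rightarrow> real list \<Rightarrow> real" where
  "dv N \<rho> \<rho>' = linf (map (\<lambda>j. \<rho> ! j - \<rho>' ! j) [0..<N])"
definition yv :: "nat \<Rightarrow> real \<Rightarrow> real list \<Rightarrow> real" where
  "yv N h \<rho> = linf (map (\<lambda>j. (rotate 1 \<rho> ! j - \<rho> ! j) / h) [0..<N])"
definition pv :: "nat \<Rightarrow> real \<Rightarrow> real list \<Rightarrow> real" where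
  "pv N h \<rho> = linf (map (\<lambda>j. (rotate 2 \<rho> ! j - 2 * rotate 1 \<rho> ! j + \<rho> ! j) / h\<^sup>2) [0..<N])"

lemma sa_I:
  assumes cont: "\<forall>\<rho>\<in>Per. continuous_on UNIV (K \<rho>) \<and> (\<forall>x. K \<rho> (x + 1) = K \<rho> x)"
    and sc: "sup_continuous_on_Per K"
    and nn: "\<And>N \<rho>. N > 2 \<Longrightarrow> length \<rho> = N \<Longrightarrow> 0 \<le> KN N \<rho>"
    and vpos: "vmax > 0" and vb: "\<And>\<rho> x. \<rho> \<in> Per \<Longrightarrow> 0 \<le> K \<rho> x \<and> K \<rho> x \<le> vmax"
    and cs: "L \<ge> 0" "c \<ge> 0" "C \<ge> 0" "S \<ge> 0"
    and fs: "\<And>t. t \<ge> 0 \<Longrightarrow> \<gamma> t \<ge> 0 \<and> \<Gamma> t \<ge> 0 \<and> W t \<ge> 0"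
    and ms: "mono_on {0..} \<gamma>" "mono_on {0..} \<Gamma>" "mono_on {0..} W"
    and ub: "\<And>N \<rho>. N > 2 \<Longrightarrow> length \<rho> = N \<Longrightarrow> (\<forall>j<N. \<rho> ! j \<ge> 0) \<Longrightarrow> KN N \<rho> \<le> vmax"
    and P1: "\<And>N rmin rmax \<rho> \<rho>'. N > 2 \<Longrightarrow> 0 < rmin \<Longrightarrow> rmin \<le> rmax \<Longrightarrow> inb N rmin rmax \<rho> \<Longrightarrow> inb N rmin rmax \<rho>' \<Longrightarrow>
        \<bar>KN N \<rho> - KN N \<rho>'\<bar> \<le> L * dv N \<rho> \<rho>'"
    and P2: "\<And>N h rmin rmax \<rho> \<rho>'. N > 2 \<Longrightarrow> 0 < rmin \<Longrightarrow> rmin \<le> rmax \<Longrightarrow> inb N rmin rmax \<rho> \<Longrightarrow> inb N rmin rmax \<rho>' \<Longrightarrow>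
        h = 1 / real N \<Longrightarrow>
        \<bar>KN N \<rho> - KN N (rotate 1 \<rho>) - KN N \<rho>' + KN N (rotate 1 \<rho>')\<bar> \<le> (h * dv N \<rho> \<rho>' + h\<^sup>2) * \<Gamma> rmax"
    and P3: "\<And>N h rmin rmax \<rho>. N > 2 \<Longrightarrow> 0 < rmin \<Longrightarrow> rmin \<le> rmax \<Longrightarrow> inb N rmin rmax \<rho> \<Longrightarrow>
        h = 1 / real N \<Longrightarrow>
        - c * h * (rmax - \<rho> ! 0) \<le> KN N (rotate 1 \<rho>) - KN N \<rho> \<and>
        KN N (rotate 1 \<rho>) - KN N \<rho> \<le> c * h * (\<rho> ! 0 - rmin)"
    and P4: "\<And>N h rmin rmax \<rho>. N > 2 \<Longrightarrow> 0 < rmin \<Longrightarrow> rmin \<le> rmax \<Longrightarrow> inb N rmin rmax \<rho> \<Longrightarrow>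
        h = 1 / real N \<Longrightarrow>
        \<bar>2 * KN N (rotate 1 \<rho>) - KN N \<rho> - KN N (rotate 2 \<rho>)\<bar> \<le> h\<^sup>2 * (\<gamma> rmax + C * yv N h \<rho>)"
    and P5: "\<And>N h rmin rmax \<rho>. N > 2 \<Longrightarrow> 0 < rmin \<Longrightarrow> rmin \<le> rmax \<Longrightarrow> inb N rmin rmax \<rho> \<Longrightarrow>
        h = 1 / real N \<Longrightarrow>
        \<bar>3 * KN N (rotate 1 \<rho>) + KN N (rotate 3 \<rho>) - KN N \<rho> - 3 * KN N (rotate 2 \<rho>)\<bar>
                \<le> h ^ 3 * (W (rmax + yv N h \<rho>) + C * pv N h \<rho>)"
    and P6: "\<And>N h rmin rmax \<rho> i. N > 2 \<Longrightarrow> 0 < rmin \<Longrightarrow> rmin \<le> rmax \<Longrightarrow> inb N rmin rmax \<rho> \<Longrightarrow>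
        h = 1 / real N \<Longrightarrow> i < N \<Longrightarrow>
        \<bar>K (PN N \<rho>) (real i * h) - KN N (rotate i \<rho>)\<bar> \<le> h * S * rmax"
  shows "smooth_approx K KN"
proof -
  have Q: "\<forall>N>2. \<forall>rmin rmax \<rho> \<rho>'. 0 < rmin \<and> rmin \<le> rmax \<and>
           length \<rho> = N \<and> length \<rho>' = N \<and>
           (\<forall>j<N. rmin \<le> \<rho> ! j \<and> \<rho> ! j \<le> rmax) \<and>
           (\<forall>j<N. rmin \<le> \<rho>' ! j \<and> \<rho>' ! j \<le> rmax) \<longrightarrow>
           (let h = 1 / real N;
                y = map (\<lambda>j. (rotate 1 \<rho> ! j - \<rho> ! j) / h) [0..<N];
                phi = map (\<lambda>j. (rotate 2 \<rho> ! j - 2 * rotate 1 \<rho> ! j + \<rho> ! j) / h\<^sup>2) [0..<N];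
                d = linf (map (\<lambda>j. \<rho> ! j - \<rho>' ! j) [0..<N])
            in
             \<bar>KN N \<rho> - KN N \<rho>'\<bar> \<le> L * d \<and>
             \<bar>KN N \<rho> - KN N (rotate 1 \<rho>) - KN N \<rho>' + KN N (rotate 1 \<rho>')\<bar>
                \<le> (h * d + h\<^sup>2) * \<Gamma> rmax \<and>
             - c * h * (rmax - \<rho> ! 0) \<le> KN N (rotate 1 \<rho>) - KN N \<rho> \<and>
             KN N (rotate 1 \<rho>) - KN N \<rho> \<le> c * h * (\<rho> ! 0 - rmin) \<and>
             \<bar>2 * KN N (rotate 1 \<rho>) - KN N \<rho> - KN N (rotate 2 \<rho>)\<bar>
                \<le> h\<^sup>2 * (\<gamma> rmax + C * linf y) \<and>
             \<bar>3 * KN N (rotate 1 \<rho>) + KN N (rotate 3 \<rho>) - KN N \<rho> - 3 * KN N (rotate 2 \<rho>)\<bar>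
                \<le> h ^ 3 * (W (rmax + linf y) + C * linf phi) \<and>
             (\<forall>i<N. \<bar>K (PN N \<rho>) (real i * h) - KN N (rotate i \<rho>)\<bar> \<le> h * S * rmax))"
  proof (intro allI impI)
    fix N :: nat and rmin rmax :: real and \<rho> \<rho>' :: "real list"
    assume N: "N > (2::nat)" and H: "0 < rmin \<and> rmin \<le> rmax \<and>
           length \<rho> = N \<and> length \<rho>' = N \<and>
           (\<forall>j<N. rmin \<le> \<rho> ! j \<and> \<rho> ! j \<le> rmax) \<and>
           (\<forall>j<N. rmin \<le> \<rho>' ! j \<and> \<rho>' ! j \<le> rmax)"
    then have i1: "inb N rmin rmax \<rho>" and i2: "inb N rmin rmax \<rho>'" and r: "0 < rmin" "rmin \<le> rmax"
      by (auto simp: inb_def)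
    note a1 = P1[OF N r i1 i2]
    note a2 = P2[OF N r i1 i2 refl]
    note a3 = P3[OF N r i1 refl]
    note a4 = P4[OF N r i1 refl]
    note a5 = P5[OF N r i1 refl]
    note a6 = P6[OF N r i1 refl]
    show "let h = 1 / real N;
                y = map (\<lambda>j. (rotate 1 \<rho> ! j - \<rho> ! j) / h) [0..<N];
                phi = map (\<lambda>j. (rotate 2 \<rho> ! j - 2 * rotate 1 \<rho> ! j + \<rho> ! j) / h\<^sup>2) [0..<N];
                d = linf (map (\<lambda>j. \<rho> ! j - \<rho>' ! j) [0..<N])
            in
             \<bar>KN N \<rho> - KN N \<rho>'\<bar> \<le> L * d \<and>
             \<bar>KN N \<rho> - KN N (rotate 1 \<rho>) - KN N \<rho>' + KN N (rotate 1 \<rho>')\<bar>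
                \<le> (h * d + h\<^sup>2) * \<Gamma> rmax \<and>
             - c * h * (rmax - \<rho> ! 0) \<le> KN N (rotate 1 \<rho>) - KN N \<rho> \<and>
             KN N (rotate 1 \<rho>) - KN N \<rho> \<le> c * h * (\<rho> ! 0 - rmin) \<and>
             \<bar>2 * KN N (rotate 1 \<rho>) - KN N \<rho> - KN N (rotate 2 \<rho>)\<bar>
                \<le> h\<^sup>2 * (\<gamma> rmax + C * linf y) \<and>
             \<bar>3 * KN N (rotate 1 \<rho>) + KN N (rotate 3 \<rho>) - KN N \<rho> - 3 * KN N (rotate 2 \<rho>)\<bar>
                \<le> h ^ 3 * (W (rmax + linf y) + C * linf phi) \<and>
             (\<forall>i<N. \<bar>K (PN N \<rho>) (real i * h) - KN N (rotate i \<rho>)\<bar> \<le> h * S * rmax)"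
      unfolding Let_def using a1 a2 a3 a4 a5 a6 unfolding dv_def yv_def pv_def by blast
  qed
  show ?thesis unfolding smooth_approx_def
    apply (intro conjI)
       apply (rule cont)
      apply (rule sc)
    using nn apply blast
    apply (rule exI[of _ vmax])
    apply (intro conjI)
      apply (rule vpos)
    using vb apply blast
    apply (rule exI[of _ L], rule exI[of _ c], rule exI[of _ C], rule exI[of _ S],
      rule exI[of _ \<gamma>], rule exI[of _ \<Gamma>], rule exI[of _ W])
    apply (intro conjI)
    using cs fs ms ub Q by blast+
qed

lemma sa_D:
  assumes "smooth_approx K KN"
  obtains vmax L c C S \<gamma> \<Gamma> W where
        "\<forall>\<rho>\<in>Per. continuous_on UNIV (K \<rho>) \<and> (\<forall>x. K \<rho> (x + 1) = K \<rho> x)"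
    and "sup_continuous_on_Per K"
    and "\<And>N \<rho>. N > 2 \<Longrightarrow> length \<rho> = N \<Longrightarrow> 0 \<le> KN N \<rho>"
    and "vmax > 0" and "\<And>\<rho> x. \<rho> \<in> Per \<Longrightarrow> 0 \<le> K \<rho> x \<and> K \<rho> x \<le> vmax"
    and "L \<ge> 0" "c \<ge> 0" "C \<ge> 0" "S \<ge> 0"
    and "\<And>t. t \<ge> 0 \<Longrightarrow> \<gamma> t \<ge> 0 \<and> \<Gamma> t \<ge> 0 \<and> W t \<ge> 0"
    and "mono_on {0..} \<gamma>" "mono_on {0..} \<Gamma>" "mono_on {0..} W"
    and "\<And>N \<rho>. N > 2 \<Longrightarrow> length \<rho> = N \<Longrightarrow> (\<forall>j<N. \<rho> ! j \<ge> 0) \<Longrightarrow> KN N \<rho> \<le> vmax"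
    and "\<And>N rmin rmax \<rho> \<rho>'. N > 2 \<Longrightarrow> 0 < rmin \<Longrightarrow> rmin \<le> rmax \<Longrightarrow> inb N rmin rmax \<rho> \<Longrightarrow> inb N rmin rmax \<rho>' \<Longrightarrow>
        \<bar>KN N \<rho> - KN N \<rho>'\<bar> \<le> L * dv N \<rho> \<rho>'"
    and "\<And>N h rmin rmax \<rho> \<rho>'. N > 2 \<Longrightarrow> 0 < rmin \<Longrightarrow> rmin \<le> rmax \<Longrightarrow> inb N rmin rmax \<rho> \<Longrightarrow> inb N rmin rmax \<rho>' \<Longrightarrow>
        h = 1 / real N \<Longrightarrow>
        \<bar>KN N \<rho> - KN N (rotate 1 \<rho>) - KN N \<rho>' + KN N (rotate 1 \<rho>')\<bar> \<le> (h * dv N \<rho> \<rho>' + h\<^sup>2) * \<Gamma> rmax"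
    and "\<And>N h rmin rmax \<rho>. N > 2 \<Longrightarrow> 0 < rmin \<Longrightarrow> rmin \<le> rmax \<Longrightarrow> inb N rmin rmax \<rho> \<Longrightarrow>
        h = 1 / real N \<Longrightarrow>
        - c * h * (rmax - \<rho> ! 0) \<le> KN N (rotate 1 \<rho>) - KN N \<rho> \<and>
        KN N (rotate 1 \<rho>) - KN N \<rho> \<le> c * h * (\<rho> ! 0 - rmin)"
    and "\<And>N h rmin rmax \<rho>. N > 2 \<Longrightarrow> 0 < rmin \<Longrightarrow> rmin \<le> rmax \<Longrightarrow> inb N rmin rmax \<rho> \<Longrightarrow>
        h = 1 / real N \<Longrightarrow>
        \<bar>2 * KN N (rotate 1 \<rho>) - KN N \<rho> - KN N (rotate 2 \<rho>)\<bar> \<le> h\<^sup>2 * (\<gamma> rmax + C * yv N h \<rho>)"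
    and "\<And>N h rmin rmax \<rho>. N > 2 \<Longrightarrow> 0 < rmin \<Longrightarrow> rmin \<le> rmax \<Longrightarrow> inb N rmin rmax \<rho> \<Longrightarrow>
        h = 1 / real N \<Longrightarrow>
        \<bar>3 * KN N (rotate 1 \<rho>) + KN N (rotate 3 \<rho>) - KN N \<rho> - 3 * KN N (rotate 2 \<rho>)\<bar>
                \<le> h ^ 3 * (W (rmax + yv N h \<rho>) + C * pv N h \<rho>)"
    and "\<And>N h rmin rmax \<rho> i. N > 2 \<Longrightarrow> 0 < rmin \<Longrightarrow> rmin \<le> rmax \<Longrightarrow> inb N rmin rmax \<rho> \<Longrightarrow>
        h = 1 / real N \<Longrightarrow> i < N \<Longrightarrow>
        \<bar>K (PN N \<rho>) (real i * h) - KN N (rotate i \<rho>)\<bar> \<le> h * S * rmax"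
proof -
  obtain vmax L c C S \<gamma> \<Gamma> W where
    A: "\<forall>\<rho>\<in>Per. continuous_on UNIV (K \<rho>) \<and> (\<forall>x. K \<rho> (x + 1) = K \<rho> x)"
       "sup_continuous_on_Per K" "\<forall>N>2. \<forall>\<rho>. length \<rho> = N \<longrightarrow> 0 \<le> KN N \<rho>"
       "vmax > 0" "\<forall>\<rho>\<in>Per. \<forall>x. 0 \<le> K \<rho> x \<and> K \<rho> x \<le> vmax"
       "L \<ge> 0" "c \<ge> 0" "C \<ge> 0" "S \<ge> 0"
       "\<forall>t\<ge>0. \<gamma> t \<ge> 0 \<and> \<Gamma> t \<ge> 0 \<and> W t \<ge> 0"
       "mono_on {0..} \<gamma>" "mono_on {0..} \<Gamma>" "mono_on {0..} W"
       "\<forall>N>2. \<forall>\<rho>. length \<rho> = N \<and> (\<forall>j<N. \<rho> ! j \<ge> 0) \<longrightarrow> KN N \<rho> \<le> vmax"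
    and Q: "\<forall>N>2. \<forall>rmin rmax \<rho> \<rho>'. 0 < rmin \<and> rmin \<le> rmax \<and>
           length \<rho> = N \<and> length \<rho>' = N \<and>
           (\<forall>j<N. rmin \<le> \<rho> ! j \<and> \<rho> ! j \<le> rmax) \<and>
           (\<forall>j<N. rmin \<le> \<rho>' ! j \<and> \<rho>' ! j \<le> rmax) \<longrightarrow>
           (let h = 1 / real N;
                y = map (\<lambda>j. (rotate 1 \<rho> ! j - \<rho> ! j) / h) [0..<N];
                phi = map (\<lambda>j. (rotate 2 \<rho> ! j - 2 * rotate 1 \<rho> ! j + \<rho> ! j) / h\<^sup>2) [0..<N];
                d = linf (map (\<lambda>j. \<rho> ! j - \<rho>' ! j) [0..<N])
            in
             \<bar>KN N \<rho> - KN N \<rho>'\<bar> \<le> L * d \<and>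
             \<bar>KN N \<rho> - KN N (rotate 1 \<rho>) - KN N \<rho>' + KN N (rotate 1 \<rho>')\<bar>
                \<le> (h * d + h\<^sup>2) * \<Gamma> rmax \<and>
             - c * h * (rmax - \<rho> ! 0) \<le> KN N (rotate 1 \<rho>) - KN N \<rho> \<and>
             KN N (rotate 1 \<rho>) - KN N \<rho> \<le> c * h * (\<rho> ! 0 - rmin) \<and>
             \<bar>2 * KN N (rotate 1 \<rho>) - KN N \<rho> - KN N (rotate 2 \<rho>)\<bar>
                \<le> h\<^sup>2 * (\<gamma> rmax + C * linf y) \<and>
             \<bar>3 * KN N (rotate 1 \<rho>) + KN N (rotate 3 \<rho>) - KN N \<rho> - 3 * KN N (rotate 2 \<rho>)\<bar>
                \<le> h ^ 3 * (W (rmax + linf y) + C * linf phi) \<and>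
             (\<forall>i<N. \<bar>K (PN N \<rho>) (real i * h) - KN N (rotate i \<rho>)\<bar> \<le> h * S * rmax))"
    using assms[unfolded smooth_approx_def] by (elim conjE exE) (rule that; assumption)
  have Q': "\<And>N rmin rmax \<rho> \<rho>'. N > 2 \<Longrightarrow> 0 < rmin \<Longrightarrow> rmin \<le> rmax \<Longrightarrow> inb N rmin rmax \<rho> \<Longrightarrow> inb N rmin rmax \<rho>' \<Longrightarrow>
      \<bar>KN N \<rho> - KN N \<rho>'\<bar> \<le> L * dv N \<rho> \<rho>' \<and>
      \<bar>KN N \<rho> - KN N (rotate 1 \<rho>) - KN N \<rho>' + KN N (rotate 1 \<rho>')\<bar> \<le> (1 / real N * dv N \<rho> \<rho>' + (1 / real N)\<^sup>2) * \<Gamma> rmax \<and>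
      - c * (1 / real N) * (rmax - \<rho> ! 0) \<le> KN N (rotate 1 \<rho>) - KN N \<rho> \<and>
        KN N (rotate 1 \<rho>) - KN N \<rho> \<le> c * (1 / real N) * (\<rho> ! 0 - rmin) \<and>
      \<bar>2 * KN N (rotate 1 \<rho>) - KN N \<rho> - KN N (rotate 2 \<rho>)\<bar> \<le> (1 / real N)\<^sup>2 * (\<gamma> rmax + C * yv N (1 / real N) \<rho>) \<and>
      \<bar>3 * KN N (rotate 1 \<rho>) + KN N (rotate 3 \<rho>) - KN N \<rho> - 3 * KN N (rotate 2 \<rho>)\<bar>
                \<le> (1 / real N) ^ 3 * (W (rmax + yv N (1 / real N) \<rho>) + C * pv N (1 / real N) \<rho>) \<and>
      (\<forall>i<N. \<bar>K (PN N \<rho>) (real i * (1 / real N)) - KN N (rotate i \<rho>)\<bar> \<le> (1 / real N) * S * rmax)"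
  proof -
    fix N rmin rmax \<rho> \<rho>'
    assume as: "N > (2::nat)" "0 < rmin" "rmin \<le> rmax" "inb N rmin rmax \<rho>" "inb N rmin rmax \<rho>'"
    have "let h = 1 / real N;
                y = map (\<lambda>j. (rotate 1 \<rho> ! j - \<rho> ! j) / h) [0..<N];
                phi = map (\<lambda>j. (rotate 2 \<rho> ! j - 2 * rotate 1 \<rho> ! j + \<rho> ! j) / h\<^sup>2) [0..<N];
                d = linf (map (\<lambda>j. \<rho> ! j - \<rho>' ! j) [0..<N])
            in
             \<bar>KN N \<rho> - KN N \<rho>'\<bar> \<le> L * d \<and>
             \<bar>KN N \<rho> - KN N (rotate 1 \<rho>) - KN N \<rho>' + KN N (rotate 1 \<rho>')\<bar>
                \<le> (h * d + h\<^sup>2) * \<Gamma> rmax \<and>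
             - c * h * (rmax - \<rho> ! 0) \<le> KN N (rotate 1 \<rho>) - KN N \<rho> \<and>
             KN N (rotate 1 \<rho>) - KN N \<rho> \<le> c * h * (\<rho> ! 0 - rmin) \<and>
             \<bar>2 * KN N (rotate 1 \<rho>) - KN N \<rho> - KN N (rotate 2 \<rho>)\<bar>
                \<le> h\<^sup>2 * (\<gamma> rmax + C * linf y) \<and>
             \<bar>3 * KN N (rotate 1 \<rho>) + KN N (rotate 3 \<rho>) - KN N \<rho> - 3 * KN N (rotate 2 \<rho>)\<bar>
                \<le> h ^ 3 * (W (rmax + linf y) + C * linf phi) \<and>
             (\<forall>i<N. \<bar>K (PN N \<rho>) (real i * h) - KN N (rotate i \<rho>)\<bar> \<le> h * S * rmax)"
      by (rule Q[rule_format]) (use as in \<open>auto simp: inb_def\<close>)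
    then show "\<bar>KN N \<rho> - KN N \<rho>'\<bar> \<le> L * dv N \<rho> \<rho>' \<and>
      \<bar>KN N \<rho> - KN N (rotate 1 \<rho>) - KN N \<rho>' + KN N (rotate 1 \<rho>')\<bar> \<le> (1 / real N * dv N \<rho> \<rho>' + (1 / real N)\<^sup>2) * \<Gamma> rmax \<and>
      - c * (1 / real N) * (rmax - \<rho> ! 0) \<le> KN N (rotate 1 \<rho>) - KN N \<rho> \<and>
        KN N (rotate 1 \<rho>) - KN N \<rho> \<le> c * (1 / real N) * (\<rho> ! 0 - rmin) \<and>
      \<bar>2 * KN N (rotate 1 \<rho>) - KN N \<rho> - KN N (rotate 2 \<rho>)\<bar> \<le> (1 / real N)\<^sup>2 * (\<gamma> rmax + C * yv N (1 / real N) \<rho>) \<and>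
      \<bar>3 * KN N (rotate 1 \<rho>) + KN N (rotate 3 \<rho>) - KN N \<rho> - 3 * KN N (rotate 2 \<rho>)\<bar>
                \<le> (1 / real N) ^ 3 * (W (rmax + yv N (1 / real N) \<rho>) + C * pv N (1 / real N) \<rho>) \<and>
      (\<forall>i<N. \<bar>K (PN N \<rho>) (real i * (1 / real N)) - KN N (rotate i \<rho>)\<bar> \<le> (1 / real N) * S * rmax)" unfolding Let_def dv_def yv_def pv_def .
  qed
  show ?thesis
    apply (rule that[of vmax L c C S \<gamma> \<Gamma> W])
    subgoal using A by blast
    subgoal using A by blast
    subgoal using A by blast
    subgoal using A by blast
    subgoal using A by blast
    subgoal using A by blast
    subgoal using A by blast
    subgoal using A by blast
    subgoal using A by blast
    subgoal using A by blast
    subgoal using A by blast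
    subgoal using A by blast
    subgoal using A by blast
    subgoal using A by blast
    subgoal using Q' by blast
    subgoal using Q' by blast
    subgoal for N h rmin rmax \<rho> using Q'[of N rmin rmax \<rho> \<rho>] by auto
    subgoal for N h rmin rmax \<rho> using Q'[of N rmin rmax \<rho> \<rho>] by auto
    subgoal for N h rmin rmax \<rho> using Q'[of N rmin rmax \<rho> \<rho>] by auto
    subgoal for N h rmin rmax \<rho> i using Q'[of N rmin rmax \<rho> \<rho>] by auto
    done
qed



lemma amul: "\<bar>x\<bar> \<le> a \<Longrightarrow> \<bar>y\<bar> \<le> b \<Longrightarrow> \<bar>x * y\<bar> \<le> a * (b::real)"
  by (simp add: abs_mult mult_mono')

lemma ar1:
  fixes a a' b b' va vb e1 e2 :: real
  assumes "0 \<le> a'" "a' \<le> va" "0 \<le> b" "b \<le> vb" "\<bar>a - a'\<bar> \<le> e1" "\<bar>b - b'\<bar> \<le> e2"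
  shows "\<bar>a * b - a' * b'\<bar> \<le> e1 * vb + va * e2"
proof -
  have eq: "a * b - a' * b' = (a - a') * b + a' * (b - b')" by (simp add: algebra_simps)
  have "\<bar>(a - a') * b\<bar> \<le> e1 * vb" using assms by (intro amul) auto
  moreover have "\<bar>a' * (b - b')\<bar> \<le> va * e2" using assms by (intro amul) auto
  ultimately show ?thesis unfolding eq by (smt (verit))
qed

lemma ar2:
  fixes k0 k1 k0' k1' g0 g1 g0' g1' E1 E2 e3 e4 e5 e6 vK vG :: real
  assumes "\<bar>k0 - k1 - k0' + k1'\<bar> \<le> E1" "\<bar>g0 - g1 - g0' + g1'\<bar> \<le> E2" "\<bar>k0' - k1'\<bar> \<le> e3"
    "\<bar>g0 - g0'\<bar> \<le> e4" "\<bar>g0' - g1'\<bar> \<le> e5" "\<bar>k1 - k1'\<bar> \<le> e6" "\<bar>g0\<bar> \<le> vG" "\<bar>k1\<bar> \<le> vK"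
  shows "\<bar>k0 * g0 - k1 * g1 - k0' * g0' + k1' * g1'\<bar> \<le> E1 * vG + e3 * e4 + vK * E2 + e5 * e6"
proof -
  have eq: "k0 * g0 - k1 * g1 - k0' * g0' + k1' * g1' = (k0 - k1 - k0' + k1') * g0 + (k0' - k1') * (g0 - g0')
     + k1 * (g0 - g1 - g0' + g1') + (g0' - g1') * (k1 - k1')" by (simp add: algebra_simps)
  have "\<bar>(k0 - k1 - k0' + k1') * g0\<bar> \<le> E1 * vG" using assms by (intro amul) auto
  moreover have "\<bar>(k0' - k1') * (g0 - g0')\<bar> \<le> e3 * e4" using assms by (intro amul) auto
  moreover have "\<bar>k1 * (g0 - g1 - g0' + g1')\<bar> \<le> vK * E2" using assms by (intro amul) auto
  moreover have "\<bar>(g0' - g1') * (k1 - k1')\<bar> \<le> e5 * e6" using assms by (intro amul) auto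
  ultimately show ?thesis unfolding eq by (smt (verit))
qed

lemma ar3a: "x \<le> (X::real) \<Longrightarrow> 0 \<le> X \<Longrightarrow> 0 \<le> g \<Longrightarrow> g \<le> v \<Longrightarrow> x * g \<le> X * v"
  by (meson mult_mono mult_right_mono order_trans)

lemma ar3:
  fixes k0 k1 g0 g1 X1 Y1 X2 Y2 vK vG :: real
  assumes "-Y1 \<le> k1 - k0" "k1 - k0 \<le> X1" "-Y2 \<le> g1 - g0" "g1 - g0 \<le> X2"
    "0 \<le> X1" "0 \<le> Y1" "0 \<le> X2" "0 \<le> Y2" "0 \<le> g1" "g1 \<le> vG" "0 \<le> k0" "k0 \<le> vK"
  shows "-(Y1 * vG + vK * Y2) \<le> k1 * g1 - k0 * g0 \<and> k1 * g1 - k0 * g0 \<le> X1 * vG + vK * X2"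
proof -
  have eq: "k1 * g1 - k0 * g0 = (k1 - k0) * g1 + k0 * (g1 - g0)" by (simp add: algebra_simps)
  have u1: "(k1 - k0) * g1 \<le> X1 * vG" using assms by (intro ar3a) auto
  have u2: "k0 * (g1 - g0) \<le> vK * X2" using ar3a[of "g1 - g0" X2 k0 vK] assms by (simp add: mult.commute)
  have l1: "(-(k1 - k0)) * g1 \<le> Y1 * vG" using assms by (intro ar3a) auto
  have l2: "k0 * (-(g1 - g0)) \<le> vK * Y2" using ar3a[of "-(g1 - g0)" Y2 k0 vK] assms by (simp add: mult.commute)
  show ?thesis unfolding eq using u1 u2 l1 l2 by (simp add: algebra_simps)
qed

lemma ar4:
  fixes f0 f1 f2 g0 g1 g2 vK vG E1 E2 e e' :: real
  assumes "\<bar>f1\<bar> \<le> vK" "\<bar>g1\<bar> \<le> vG" "\<bar>2 * g1 - g0 - g2\<bar> \<le> E2" "\<bar>2 * f1 - f0 - f2\<bar> \<le> E1"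
    "\<bar>f1 - f0\<bar> \<le> e" "\<bar>f2 - f1\<bar> \<le> e" "\<bar>g1 - g0\<bar> \<le> e'" "\<bar>g2 - g1\<bar> \<le> e'"
  shows "\<bar>2 * (f1 * g1) - f0 * g0 - f2 * g2\<bar> \<le> vK * E2 + vG * E1 + 2 * (e * e')"
proof -
  have eq: "2 * (f1 * g1) - f0 * g0 - f2 * g2 = f1 * (2 * g1 - g0 - g2) + g1 * (2 * f1 - f0 - f2)
     - (f1 - f0) * (g1 - g0) - (f2 - f1) * (g2 - g1)" by (simp add: algebra_simps)
  have "\<bar>f1 * (2 * g1 - g0 - g2)\<bar> \<le> vK * E2" using assms by (intro amul) auto
  moreover have "\<bar>g1 * (2 * f1 - f0 - f2)\<bar> \<le> vG * E1" using assms by (intro amul) auto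
  moreover have "\<bar>(f1 - f0) * (g1 - g0)\<bar> \<le> e * e'" using assms by (intro amul) auto
  moreover have "\<bar>(f2 - f1) * (g2 - g1)\<bar> \<le> e * e'" using assms by (intro amul) auto
  ultimately show ?thesis unfolding eq by (smt (verit))
qed

lemma ar5:
  fixes f0 f1 f2 f3 g0 g1 g2 g3 vK vG E3G E2G E2K E3K e e' :: real
  assumes "\<bar>f0\<bar> \<le> vK" "\<bar>3 * g1 + g3 - g0 - 3 * g2\<bar> \<le> E3G" "\<bar>f1 - f0\<bar> \<le> e"
    "\<bar>2 * g2 - g1 - g3\<bar> \<le> E2G" "\<bar>2 * f1 - f0 - f2\<bar> \<le> E2K" "\<bar>g3 - g2\<bar> \<le> e'"
    "\<bar>3 * f1 + f3 - f0 - 3 * f2\<bar> \<le> E3K" "\<bar>g3\<bar> \<le> vG"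
  shows "\<bar>3 * (f1 * g1) + f3 * g3 - f0 * g0 - 3 * (f2 * g2)\<bar> \<le> vK * E3G + 3 * (e * E2G) + 3 * (E2K * e') + E3K * vG"
proof -
  have eq: "3 * (f1 * g1) + f3 * g3 - f0 * g0 - 3 * (f2 * g2) = f0 * (3 * g1 + g3 - g0 - 3 * g2)
    + 3 * ((f1 - f0) * (-(2 * g2 - g1 - g3))) + 3 * ((-(2 * f1 - f0 - f2)) * (g3 - g2))
    + (3 * f1 + f3 - f0 - 3 * f2) * g3" by (simp add: algebra_simps)
  have "\<bar>f0 * (3 * g1 + g3 - g0 - 3 * g2)\<bar> \<le> vK * E3G" using assms by (intro amul) auto
  moreover have "\<bar>(f1 - f0) * (-(2 * g2 - g1 - g3))\<bar> \<le> e * E2G" using assms by (intro amul) auto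
  moreover have "\<bar>(-(2 * f1 - f0 - f2)) * (g3 - g2)\<bar> \<le> E2K * e'" using assms by (intro amul) auto
  moreover have "\<bar>(3 * f1 + f3 - f0 - 3 * f2) * g3\<bar> \<le> E3K * vG" using assms by (intro amul) auto
  ultimately show ?thesis unfolding eq by (smt (verit))
qed

lemma p3abs:
  fixes c h rmin rmax a x :: real
  assumes "- c * h * (rmax - a) \<le> x" "x \<le> c * h * (a - rmin)" "0 < rmin" "rmin \<le> a" "a \<le> rmax" "0 \<le> c" "0 \<le> h"
  shows "\<bar>x\<bar> \<le> c * h * rmax"
proof -
  have "c * h * (a - rmin) \<le> c * h * rmax" using assms by (intro mult_left_mono) auto
  moreover have "c * h * (rmax - a) \<le> c * h * rmax" using assms by (intro mult_left_mono) auto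
  ultimately show ?thesis using assms by (simp add: abs_le_iff)
qed



lemma linf_nonneg: "xs \<noteq> [] \<Longrightarrow> 0 \<le> linf xs"
  unfolding linf_def
  by (metis (mono_tags, lifting) List.finite_set Max_ge abs_ge_zero dual_order.trans length_greater_0_conv list.set_map nth_mem image_eqI)

lemma linf_ge: "i < length xs \<Longrightarrow> \<bar>xs ! i\<bar> \<le> linf xs"
  unfolding linf_def by (intro Max_ge) auto

lemma linf_rotate: "linf (rotate k xs) = linf xs"
  unfolding linf_def by (simp add: rotate_map[symmetric])

lemma map_rotate2:
  assumes "length xs = N" "length ys = N"
  shows "map (\<lambda>j. f (rotate k xs ! j) (rotate k ys ! j)) [0..<N] = rotate k (map (\<lambda>j. f (xs ! j) (ys ! j)) [0..<N])"
  by (rule nth_equalityI) (auto simp: assms nth_rotate)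

lemma dv_rotate: "length \<rho> = N \<Longrightarrow> length \<rho>' = N \<Longrightarrow> dv N (rotate k \<rho>) (rotate k \<rho>') = dv N \<rho> \<rho>'"
  unfolding dv_def using map_rotate2[of \<rho> N \<rho>' "\<lambda>a b. a - b" k] by (simp add: linf_rotate)

lemma yv_rotate: "length \<rho> = N \<Longrightarrow> yv N h (rotate 1 \<rho>) = yv N h \<rho>"
proof -
  assume l: "length \<rho> = N"
  have "map (\<lambda>j. (rotate 1 (rotate 1 \<rho>) ! j - rotate 1 \<rho> ! j) / h) [0..<N]
     = rotate 1 (map (\<lambda>j. (rotate 1 \<rho> ! j - \<rho> ! j) / h) [0..<N])"
    using map_rotate2[of "rotate 1 \<rho>" N \<rho> "\<lambda>a b. (a - b) / h" 1] l by simp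
  then show ?thesis unfolding yv_def using linf_rotate[of 1] by simp
qed

lemma inb_rotate: "inb N rmin rmax \<rho> \<Longrightarrow> inb N rmin rmax (rotate k \<rho>)"
  unfolding inb_def by (auto simp: nth_rotate)

lemma dv_nonneg: "N > 0 \<Longrightarrow> 0 \<le> dv N \<rho> \<rho>'"
  unfolding dv_def by (rule linf_nonneg) simp

lemma yv_nonneg: "N > 0 \<Longrightarrow> 0 \<le> yv N h \<rho>"
  unfolding yv_def by (rule linf_nonneg) simp

lemma pv_nonneg: "N > 0 \<Longrightarrow> 0 \<le> pv N h \<rho>"
  unfolding pv_def by (rule linf_nonneg) simp

lemma inb_0: "N > 0 \<Longrightarrow> inb N rmin rmax \<rho> \<Longrightarrow> rmin \<le> \<rho> ! 0 \<and> \<rho> ! 0 \<le> rmax"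
  unfolding inb_def by auto

lemma inb_nonneg: "inb N rmin rmax \<rho> \<Longrightarrow> 0 < rmin \<Longrightarrow> length \<rho> = N \<and> (\<forall>j<N. \<rho> ! j \<ge> 0)"
  unfolding inb_def by force

lemma inb_pos: "inb N rmin rmax \<rho> \<Longrightarrow> 0 < rmin \<Longrightarrow> length \<rho> = N \<and> (\<forall>j<N. \<rho> ! j > 0)"
  unfolding inb_def by force



locale sa =
  fixes K :: "(real \<Rightarrow> real) \<Rightarrow> (real \<Rightarrow> real)" and KN :: "nat \<Rightarrow> real list \<Rightarrow> real"
    and vmax L c C S :: real and \<gamma> \<Gamma> W :: "real \<Rightarrow> real"
  assumes cont: "\<forall>\<rho>\<in>Per. continuous_on UNIV (K \<rho>) \<and> (\<forall>x. K \<rho> (x + 1) = K \<rho> x)"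
    and sc: "sup_continuous_on_Per K"
    and nn: "\<And>N \<rho>. N > 2 \<Longrightarrow> length \<rho> = N \<Longrightarrow> 0 \<le> KN N \<rho>"
    and vpos: "vmax > 0" and vb: "\<And>\<rho> x. \<rho> \<in> Per \<Longrightarrow> 0 \<le> K \<rho> x \<and> K \<rho> x \<le> vmax"
    and cs: "L \<ge> 0" "c \<ge> 0" "C \<ge> 0" "S \<ge> 0"
    and fs: "\<And>t. t \<ge> 0 \<Longrightarrow> \<gamma> t \<ge> 0 \<and> \<Gamma> t \<ge> 0 \<and> W t \<ge> 0"
    and ms: "mono_on {0..} \<gamma>" "mono_on {0..} \<Gamma>" "mono_on {0..} W"
    and ub: "\<And>N \<rho>. N > 2 \<Longrightarrow> length \<rho> = N \<Longrightarrow> (\<forall>j<N. \<rho> ! j \<ge> 0) \<Longrightarrow> KN N \<rho> \<le> vmax"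
    and P1: "\<And>N rmin rmax \<rho> \<rho>'. N > 2 \<Longrightarrow> 0 < rmin \<Longrightarrow> rmin \<le> rmax \<Longrightarrow> inb N rmin rmax \<rho> \<Longrightarrow> inb N rmin rmax \<rho>' \<Longrightarrow>
        \<bar>KN N \<rho> - KN N \<rho>'\<bar> \<le> L * dv N \<rho> \<rho>'"
    and P2: "\<And>N h rmin rmax \<rho> \<rho>'. N > 2 \<Longrightarrow> 0 < rmin \<Longrightarrow> rmin \<le> rmax \<Longrightarrow> inb N rmin rmax \<rho> \<Longrightarrow> inb N rmin rmax \<rho>' \<Longrightarrow>
        h = 1 / real N \<Longrightarrow>
        \<bar>KN N \<rho> - KN N (rotate 1 \<rho>) - KN N \<rho>' + KN N (rotate 1 \<rho>')\<bar> \<le> (h * dv N \<rho> \<rho>' + h\<^sup>2) * \<Gamma> rmax"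
    and P3: "\<And>N h rmin rmax \<rho>. N > 2 \<Longrightarrow> 0 < rmin \<Longrightarrow> rmin \<le> rmax \<Longrightarrow> inb N rmin rmax \<rho> \<Longrightarrow>
        h = 1 / real N \<Longrightarrow>
        - c * h * (rmax - \<rho> ! 0) \<le> KN N (rotate 1 \<rho>) - KN N \<rho> \<and>
        KN N (rotate 1 \<rho>) - KN N \<rho> \<le> c * h * (\<rho> ! 0 - rmin)"
    and P4: "\<And>N h rmin rmax \<rho>. N > 2 \<Longrightarrow> 0 < rmin \<Longrightarrow> rmin \<le> rmax \<Longrightarrow> inb N rmin rmax \<rho> \<Longrightarrow>
        h = 1 / real N \<Longrightarrow>
        \<bar>2 * KN N (rotate 1 \<rho>) - KN N \<rho> - KN N (rotate 2 \<rho>)\<bar> \<le> h\<^sup>2 * (\<gamma> rmax + C * yv N h \<rho>)"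
    and P5: "\<And>N h rmin rmax \<rho>. N > 2 \<Longrightarrow> 0 < rmin \<Longrightarrow> rmin \<le> rmax \<Longrightarrow> inb N rmin rmax \<rho> \<Longrightarrow>
        h = 1 / real N \<Longrightarrow>
        \<bar>3 * KN N (rotate 1 \<rho>) + KN N (rotate 3 \<rho>) - KN N \<rho> - 3 * KN N (rotate 2 \<rho>)\<bar>
                \<le> h ^ 3 * (W (rmax + yv N h \<rho>) + C * pv N h \<rho>)"
    and P6: "\<And>N h rmin rmax \<rho> i. N > 2 \<Longrightarrow> 0 < rmin \<Longrightarrow> rmin \<le> rmax \<Longrightarrow> inb N rmin rmax \<rho> \<Longrightarrow>
        h = 1 / real N \<Longrightarrow> i < N \<Longrightarrow>
        \<bar>K (PN N \<rho>) (real i * h) - KN N (rotate i \<rho>)\<bar> \<le> h * S * rmax"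

lemma sa_to: "sa K KN vmax L c C S \<gamma> \<Gamma> W \<Longrightarrow> smooth_approx K KN"
  by (rule sa_I) (erule sa.cont sa.sc sa.nn sa.vpos sa.vb sa.cs sa.fs sa.ms sa.ub sa.P1 sa.P2 sa.P3 sa.P4 sa.P5 sa.P6; assumption)+

lemma sa_from:
  assumes "smooth_approx K KN"
  obtains vmax L c C S \<gamma> \<Gamma> W where "sa K KN vmax L c C S \<gamma> \<Gamma> W"
proof -
  from assms show ?thesis
  proof (rule sa_D)
    fix vmax L c C S \<gamma> \<Gamma> W
    assume a: "\<forall>\<rho>\<in>Per. continuous_on UNIV (K \<rho>) \<and> (\<forall>x. K \<rho> (x + 1) = K \<rho> x)"
    "sup_continuous_on_Per K"
    "\<And>N \<rho>. N > 2 \<Longrightarrow> length \<rho> = N \<Longrightarrow> 0 \<le> KN N \<rho>"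
    "vmax > 0" "\<And>\<rho> x. \<rho> \<in> Per \<Longrightarrow> 0 \<le> K \<rho> x \<and> K \<rho> x \<le> vmax"
    "L \<ge> 0" "c \<ge> 0" "C \<ge> 0" "S \<ge> 0"
    "\<And>t. t \<ge> 0 \<Longrightarrow> \<gamma> t \<ge> 0 \<and> \<Gamma> t \<ge> 0 \<and> W t \<ge> 0"
    "mono_on {0..} \<gamma>" "mono_on {0..} \<Gamma>" "mono_on {0..} W"
    "\<And>N \<rho>. N > 2 \<Longrightarrow> length \<rho> = N \<Longrightarrow> (\<forall>j<N. \<rho> ! j \<ge> 0) \<Longrightarrow> KN N \<rho> \<le> vmax"
    "\<And>N rmin rmax \<rho> \<rho>'. N > 2 \<Longrightarrow> 0 < rmin \<Longrightarrow> rmin \<le> rmax \<Longrightarrow> inb N rmin rmax \<rho> \<Longrightarrow> inb N rmin rmax \<rho>' \<Longrightarrow>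
        \<bar>KN N \<rho> - KN N \<rho>'\<bar> \<le> L * dv N \<rho> \<rho>'"
    "\<And>N h rmin rmax \<rho> \<rho>'. N > 2 \<Longrightarrow> 0 < rmin \<Longrightarrow> rmin \<le> rmax \<Longrightarrow> inb N rmin rmax \<rho> \<Longrightarrow> inb N rmin rmax \<rho>' \<Longrightarrow>
        h = 1 / real N \<Longrightarrow>
        \<bar>KN N \<rho> - KN N (rotate 1 \<rho>) - KN N \<rho>' + KN N (rotate 1 \<rho>')\<bar> \<le> (h * dv N \<rho> \<rho>' + h\<^sup>2) * \<Gamma> rmax"
    "\<And>N h rmin rmax \<rho>. N > 2 \<Longrightarrow> 0 < rmin \<Longrightarrow> rmin \<le> rmax \<Longrightarrow> inb N rmin rmax \<rho> \<Longrightarrow>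
        h = 1 / real N \<Longrightarrow>
        - c * h * (rmax - \<rho> ! 0) \<le> KN N (rotate 1 \<rho>) - KN N \<rho> \<and>
        KN N (rotate 1 \<rho>) - KN N \<rho> \<le> c * h * (\<rho> ! 0 - rmin)"
    "\<And>N h rmin rmax \<rho>. N > 2 \<Longrightarrow> 0 < rmin \<Longrightarrow> rmin \<le> rmax \<Longrightarrow> inb N rmin rmax \<rho> \<Longrightarrow>
        h = 1 / real N \<Longrightarrow>
        \<bar>2 * KN N (rotate 1 \<rho>) - KN N \<rho> - KN N (rotate 2 \<rho>)\<bar> \<le> h\<^sup>2 * (\<gamma> rmax + C * yv N h \<rho>)"
    "\<And>N h rmin rmax \<rho>. N > 2 \<Longrightarrow> 0 < rmin \<Longrightarrow> rmin \<le> rmax \<Longrightarrow> inb N rmin rmax \<rho> \<Longrightarrow>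
        h = 1 / real N \<Longrightarrow>
        \<bar>3 * KN N (rotate 1 \<rho>) + KN N (rotate 3 \<rho>) - KN N \<rho> - 3 * KN N (rotate 2 \<rho>)\<bar>
                \<le> h ^ 3 * (W (rmax + yv N h \<rho>) + C * pv N h \<rho>)"
    "\<And>N h rmin rmax \<rho> i. N > 2 \<Longrightarrow> 0 < rmin \<Longrightarrow> rmin \<le> rmax \<Longrightarrow> inb N rmin rmax \<rho> \<Longrightarrow>
        h = 1 / real N \<Longrightarrow> i < N \<Longrightarrow>
        \<bar>K (PN N \<rho>) (real i * h) - KN N (rotate i \<rho>)\<bar> \<le> h * S * rmax"
    have "sa K KN vmax L c C S \<gamma> \<Gamma> W" by (rule sa.intro) (rule a; assumption)+
    then show ?thesis by (rule that)
  qed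
qed

lemma r11: "rotate 1 (rotate 1 xs) = rotate 2 xs" unfolding rotate_rotate by (simp only: one_add_one)
lemma r21: "rotate 2 (rotate 1 xs) = rotate 3 xs" unfolding rotate_rotate by (simp only: numeral.simps)
lemma r12: "rotate 1 (rotate 2 xs) = rotate 3 xs" unfolding rotate_rotate by (simp only: numeral.simps add.commute)



lemma sc_prod:
  assumes scK: "sup_continuous_on_Per K" and scG: "sup_continuous_on_Per G"
    and bK: "\<And>\<rho> x. \<rho> \<in> Per \<Longrightarrow> 0 \<le> K \<rho> x \<and> K \<rho> x \<le> vK"
    and bG: "\<And>\<rho> x. \<rho> \<in> Per \<Longrightarrow> 0 \<le> G \<rho> x \<and> G \<rho> x \<le> vG"
    and vK: "vK > 0" and vG: "vG > 0"
  shows "sup_continuous_on_Per (\<lambda>\<rho> x. K \<rho> x * G \<rho> x)"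
  unfolding sup_continuous_on_Per_def
proof (intro ballI allI impI)
  fix \<rho> :: "real \<Rightarrow> real" and \<epsilon> :: real
  assume \<rho>: "\<rho> \<in> Per" and e: "\<epsilon> > 0"
  define e1 where "e1 = \<epsilon> / (2 * vG)"
  define e2 where "e2 = \<epsilon> / (2 * vK)"
  have e1: "e1 > 0" "e1 * vG = \<epsilon> / 2" unfolding e1_def using e vG by auto
  have e2: "e2 > 0" "vK * e2 = \<epsilon> / 2" unfolding e2_def using e vK by auto
  obtain d1 where d1: "d1 > 0" "\<forall>\<sigma>\<in>Per. (\<forall>x. \<bar>\<rho> x - \<sigma> x\<bar> \<le> d1) \<longrightarrow> (\<forall>x. \<bar>K \<rho> x - K \<sigma> x\<bar> \<le> e1)"
    using scK \<rho> e1(1) unfolding sup_continuous_on_Per_def by blast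
  obtain d2 where d2: "d2 > 0" "\<forall>\<sigma>\<in>Per. (\<forall>x. \<bar>\<rho> x - \<sigma> x\<bar> \<le> d2) \<longrightarrow> (\<forall>x. \<bar>G \<rho> x - G \<sigma> x\<bar> \<le> e2)"
    using scG \<rho> e2(1) unfolding sup_continuous_on_Per_def by blast
  show "\<exists>\<delta>>0. \<forall>\<sigma>\<in>Per. (\<forall>x. \<bar>\<rho> x - \<sigma> x\<bar> \<le> \<delta>) \<longrightarrow> (\<forall>x. \<bar>K \<rho> x * G \<rho> x - K \<sigma> x * G \<sigma> x\<bar> \<le> \<epsilon>)"
  proof (intro exI[of _ "min d1 d2"] conjI ballI impI allI)
    show "min d1 d2 > 0" using d1 d2 by simp
    fix \<sigma> x assume \<sigma>: "\<sigma> \<in> Per" and cl: "\<forall>x. \<bar>\<rho> x - \<sigma> x\<bar> \<le> min d1 d2"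
    have k: "\<bar>K \<rho> x - K \<sigma> x\<bar> \<le> e1" using d1(2) \<sigma> cl by auto
    have g: "\<bar>G \<rho> x - G \<sigma> x\<bar> \<le> e2" using d2(2) \<sigma> cl by auto
    have "\<bar>K \<rho> x * G \<rho> x - K \<sigma> x * G \<sigma> x\<bar> \<le> e1 * vG + vK * e2"
      by (rule ar1) (use bK[OF \<sigma>] bG[OF \<rho>] k g in auto)
    then show "\<bar>K \<rho> x * G \<rho> x - K \<sigma> x * G \<sigma> x\<bar> \<le> \<epsilon>" using e1 e2 by simp
  qed
qed

lemma sc_sum:
  assumes scK: "sup_continuous_on_Per K" and scG: "sup_continuous_on_Per G"
  shows "sup_continuous_on_Per (\<lambda>\<rho> x. K \<rho> x + G \<rho> x)"
  unfolding sup_continuous_on_Per_def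
proof (intro ballI allI impI)
  fix \<rho> :: "real \<Rightarrow> real" and \<epsilon> :: real
  assume \<rho>: "\<rho> \<in> Per" and e: "\<epsilon> > 0"
  obtain d1 where d1: "d1 > 0" "\<forall>\<sigma>\<in>Per. (\<forall>x. \<bar>\<rho> x - \<sigma> x\<bar> \<le> d1) \<longrightarrow> (\<forall>x. \<bar>K \<rho> x - K \<sigma> x\<bar> \<le> \<epsilon> / 2)"
    using scK \<rho> e unfolding sup_continuous_on_Per_def by (meson half_gt_zero)
  obtain d2 where d2: "d2 > 0" "\<forall>\<sigma>\<in>Per. (\<forall>x. \<bar>\<rho> x - \<sigma> x\<bar> \<le> d2) \<longrightarrow> (\<forall>x. \<bar>G \<rho> x - G \<sigma> x\<bar> \<le> \<epsilon> / 2)"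
    using scG \<rho> e unfolding sup_continuous_on_Per_def by (meson half_gt_zero)
  show "\<exists>\<delta>>0. \<forall>\<sigma>\<in>Per. (\<forall>x. \<bar>\<rho> x - \<sigma> x\<bar> \<le> \<delta>) \<longrightarrow> (\<forall>x. \<bar>K \<rho> x + G \<rho> x - (K \<sigma> x + G \<sigma> x)\<bar> \<le> \<epsilon>)"
  proof (intro exI[of _ "min d1 d2"] conjI ballI impI allI)
    show "min d1 d2 > 0" using d1 d2 by simp
    fix \<sigma> x assume \<sigma>: "\<sigma> \<in> Per" and cl: "\<forall>x. \<bar>\<rho> x - \<sigma> x\<bar> \<le> min d1 d2"
    have k: "\<bar>K \<rho> x - K \<sigma> x\<bar> \<le> \<epsilon> / 2" using d1(2) \<sigma> cl by auto
    have g: "\<bar>G \<rho> x - G \<sigma> x\<bar> \<le> \<epsilon> / 2" using d2(2) \<sigma> cl by auto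
    show "\<bar>K \<rho> x + G \<rho> x - (K \<sigma> x + G \<sigma> x)\<bar> \<le> \<epsilon>" using k g by linarith
  qed
qed



lemma prod_sa:
  assumes hK: "sa K KN vK LK cK CK SK \<gamma>K \<Gamma>K WK" and hG: "sa G GN vG LG cG CG SG \<gamma>G \<Gamma>G WG"
  shows "sa (\<lambda>\<rho> x. K \<rho> x * G \<rho> x) (\<lambda>N \<rho>. KN N \<rho> * GN N \<rho>) (vK * vG) (vG * LK + vK * LG)
    (cK * vG + cG * vK) (vK * CG + vG * CK) (SK * vG + SG * vK)
    (\<lambda>t. vK * \<gamma>G t + vG * \<gamma>K t + 2 * (cK * cG) * t\<^sup>2)
    (\<lambda>t. vG * \<Gamma>K t + vK * \<Gamma>G t + (cK * LG + cG * LK) * t)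
    (\<lambda>t. vK * WG t + vG * WK t + 3 * cK * (t * (\<gamma>G t + CG * t)) + 3 * cG * (t * (\<gamma>K t + CK * t)))"
proof -
  note Kc = sa.cs[OF hK] and Gc = sa.cs[OF hG]
  have vK: "vK > 0" by (rule sa.vpos[OF hK])
  have vG: "vG > 0" by (rule sa.vpos[OF hG])
  note Kf = sa.fs[OF hK] and Gf = sa.fs[OF hG]
  note Km = sa.ms[OF hK] and Gm = sa.ms[OF hG]
  have Kb: "0 \<le> KN N \<rho> \<and> KN N \<rho> \<le> vK" if "N > 2" "length \<rho> = N" "\<forall>j<N. \<rho> ! j \<ge> 0" for N \<rho>
    using sa.nn[OF hK] sa.ub[OF hK] that by blast
  have Gb: "0 \<le> GN N \<rho> \<and> GN N \<rho> \<le> vG" if "N > 2" "length \<rho> = N" "\<forall>j<N. \<rho> ! j \<ge> 0" for N \<rho>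
    using sa.nn[OF hG] sa.ub[OF hG] that by blast
  have Kbi: "0 \<le> KN N \<rho> \<and> KN N \<rho> \<le> vK" if "N > 2" "inb N rmin rmax \<rho>" "0 < rmin" for N \<rho> rmin rmax
    using Kb inb_nonneg that by blast
  have Gbi: "0 \<le> GN N \<rho> \<and> GN N \<rho> \<le> vG" if "N > 2" "inb N rmin rmax \<rho>" "0 < rmin" for N \<rho> rmin rmax
    using Gb inb_nonneg that by blast
  have K3: "\<bar>KN N (rotate 1 \<rho>) - KN N \<rho>\<bar> \<le> cK * h * rmax"
    if "N > 2" "0 < rmin" "rmin \<le> rmax" "inb N rmin rmax \<rho>" "h = 1 / real N" for N h rmin rmax \<rho>
    using sa.P3[OF hK that] inb_0[OF _ that(4)] that Kc by (intro p3abs[of cK h rmax "\<rho> ! 0" _ rmin]) auto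
  have G3: "\<bar>GN N (rotate 1 \<rho>) - GN N \<rho>\<bar> \<le> cG * h * rmax"
    if "N > 2" "0 < rmin" "rmin \<le> rmax" "inb N rmin rmax \<rho>" "h = 1 / real N" for N h rmin rmax \<rho>
    using sa.P3[OF hG that] inb_0[OF _ that(4)] that Gc by (intro p3abs[of cG h rmax "\<rho> ! 0" _ rmin]) auto
  show ?thesis
  proof (rule sa.intro)
    show "\<forall>\<rho>\<in>Per. continuous_on UNIV (\<lambda>x. K \<rho> x * G \<rho> x) \<and> (\<forall>x. K \<rho> (x + 1) * G \<rho> (x + 1) = K \<rho> x * G \<rho> x)"
      using sa.cont[OF hK] sa.cont[OF hG] by (auto intro: continuous_on_mult)
    show "sup_continuous_on_Per (\<lambda>\<rho> x. K \<rho> x * G \<rho> x)"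
      by (rule sc_prod[OF sa.sc[OF hK] sa.sc[OF hG] sa.vb[OF hK] sa.vb[OF hG] vK vG])
    show "\<And>N \<rho>. N > 2 \<Longrightarrow> length \<rho> = N \<Longrightarrow> 0 \<le> KN N \<rho> * GN N \<rho>"
      using sa.nn[OF hK] sa.nn[OF hG] by simp
    show "vK * vG > 0" using vK vG by simp
    show "\<And>\<rho> x. \<rho> \<in> Per \<Longrightarrow> 0 \<le> K \<rho> x * G \<rho> x \<and> K \<rho> x * G \<rho> x \<le> vK * vG"
    proof -
      fix \<rho> x assume p: "\<rho> \<in> Per"
      show "0 \<le> K \<rho> x * G \<rho> x \<and> K \<rho> x * G \<rho> x \<le> vK * vG"
        using sa.vb[OF hK p, of x] sa.vb[OF hG p, of x] by (simp add: mult_mono)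
    qed
    show "vG * LK + vK * LG \<ge> 0" "cK * vG + cG * vK \<ge> 0" "vK * CG + vG * CK \<ge> 0" "SK * vG + SG * vK \<ge> 0"
      using Kc Gc vK vG by auto
    show "\<And>t. t \<ge> 0 \<Longrightarrow> vK * \<gamma>G t + vG * \<gamma>K t + 2 * (cK * cG) * t\<^sup>2 \<ge> 0 \<and>
       vG * \<Gamma>K t + vK * \<Gamma>G t + (cK * LG + cG * LK) * t \<ge> 0 \<and>
       vK * WG t + vG * WK t + 3 * cK * (t * (\<gamma>G t + CG * t)) + 3 * cG * (t * (\<gamma>K t + CK * t)) \<ge> 0"
      using Kf Gf Kc Gc vK vG by auto
    show "mono_on {0..} (\<lambda>t. vK * \<gamma>G t + vG * \<gamma>K t + 2 * (cK * cG) * t\<^sup>2)"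
    proof (rule mono_onI)
      fix r s :: real assume "r \<in> {0..}" "s \<in> {0..}" "r \<le> s"
      moreover have "\<gamma>G r \<le> \<gamma>G s" "\<gamma>K r \<le> \<gamma>K s" using mono_onD[OF Gm(1)] mono_onD[OF Km(1)] calculation by auto
      moreover have "r\<^sup>2 \<le> s\<^sup>2" using calculation by (intro power_mono) auto
      ultimately show "vK * \<gamma>G r + vG * \<gamma>K r + 2 * (cK * cG) * r\<^sup>2 \<le> vK * \<gamma>G s + vG * \<gamma>K s + 2 * (cK * cG) * s\<^sup>2"
        using vK vG Kc Gc by (intro add_mono mult_left_mono) auto
    qed
    show "mono_on {0..} (\<lambda>t. vG * \<Gamma>K t + vK * \<Gamma>G t + (cK * LG + cG * LK) * t)"
    proof (rule mono_onI)
      fix r s :: real assume "r \<in> {0..}" "s \<in> {0..}" "r \<le> s"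
      moreover have "\<Gamma>G r \<le> \<Gamma>G s" "\<Gamma>K r \<le> \<Gamma>K s" using mono_onD[OF Gm(2)] mono_onD[OF Km(2)] calculation by auto
      ultimately show "vG * \<Gamma>K r + vK * \<Gamma>G r + (cK * LG + cG * LK) * r \<le> vG * \<Gamma>K s + vK * \<Gamma>G s + (cK * LG + cG * LK) * s"
        using vK vG Kc Gc by (intro add_mono mult_left_mono) auto
    qed
    show "mono_on {0..} (\<lambda>t. vK * WG t + vG * WK t + 3 * cK * (t * (\<gamma>G t + CG * t)) + 3 * cG * (t * (\<gamma>K t + CK * t)))"
    proof (rule mono_onI)
      fix r s :: real assume rs: "r \<in> {0..}" "s \<in> {0..}" "r \<le> s"
      have a: "\<gamma>G r \<le> \<gamma>G s" "\<gamma>K r \<le> \<gamma>K s" using mono_onD[OF Gm(1)] mono_onD[OF Km(1)] rs by auto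
      have b: "WG r \<le> WG s" "WK r \<le> WK s" using mono_onD[OF Gm(3)] mono_onD[OF Km(3)] rs by auto
      have c1: "r * (\<gamma>G r + CG * r) \<le> s * (\<gamma>G s + CG * s)"
        using rs a Gf[of r] Gc by (intro mult_mono add_mono mult_left_mono) auto
      have c2: "r * (\<gamma>K r + CK * r) \<le> s * (\<gamma>K s + CK * s)"
        using rs a Kf[of r] Kc by (intro mult_mono add_mono mult_left_mono) auto
      show "vK * WG r + vG * WK r + 3 * cK * (r * (\<gamma>G r + CG * r)) + 3 * cG * (r * (\<gamma>K r + CK * r))
          \<le> vK * WG s + vG * WK s + 3 * cK * (s * (\<gamma>G s + CG * s)) + 3 * cG * (s * (\<gamma>K s + CK * s))"
        using vK vG Kc Gc b c1 c2 by (intro add_mono mult_left_mono) auto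
    qed
    show "\<And>N \<rho>. N > 2 \<Longrightarrow> length \<rho> = N \<Longrightarrow> (\<forall>j<N. \<rho> ! j \<ge> 0) \<Longrightarrow> KN N \<rho> * GN N \<rho> \<le> vK * vG"
    proof -
      fix N and \<rho> :: "real list" assume p: "N > 2" "length \<rho> = N" "\<forall>j<N. \<rho> ! j \<ge> 0"
      show "KN N \<rho> * GN N \<rho> \<le> vK * vG"
        using Kb[OF p] Gb[OF p] by (simp add: mult_mono)
    qed
  next
    fix N rmin rmax \<rho> \<rho>'
    assume N: "N > (2::nat)" and r: "0 < rmin" "rmin \<le> rmax" and i: "inb N rmin rmax \<rho>" "inb N rmin rmax \<rho>'"
    have "\<bar>KN N \<rho> * GN N \<rho> - KN N \<rho>' * GN N \<rho>'\<bar> \<le> (LK * dv N \<rho> \<rho>') * vG + vK * (LG * dv N \<rho> \<rho>')"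
      by (rule ar1) (use Kbi[OF N i(2) r(1)] Gbi[OF N i(1) r(1)] sa.P1[OF hK N r i] sa.P1[OF hG N r i] in auto)
    then show "\<bar>KN N \<rho> * GN N \<rho> - KN N \<rho>' * GN N \<rho>'\<bar> \<le> (vG * LK + vK * LG) * dv N \<rho> \<rho>'"
      by (simp add: algebra_simps)
  next
    fix N h rmin rmax \<rho> \<rho>'
    assume N: "N > (2::nat)" and r: "0 < rmin" "rmin \<le> rmax" and i: "inb N rmin rmax \<rho>" "inb N rmin rmax \<rho>'"
      and h: "h = 1 / real N"
    have hp: "h \<ge> 0" using h by simp
    have dp: "dv N \<rho> \<rho>' \<ge> 0" using N by (intro dv_nonneg) auto
    have l: "length \<rho> = N" "length \<rho>' = N" using i by (auto simp: inb_def)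
    have i1: "inb N rmin rmax (rotate 1 \<rho>)" "inb N rmin rmax (rotate 1 \<rho>')" using i inb_rotate by blast+
    define d where "d = dv N \<rho> \<rho>'"
    have "\<bar>KN N \<rho> * GN N \<rho> - KN N (rotate 1 \<rho>) * GN N (rotate 1 \<rho>) - KN N \<rho>' * GN N \<rho>' + KN N (rotate 1 \<rho>') * GN N (rotate 1 \<rho>')\<bar>
      \<le> ((h * d + h\<^sup>2) * \<Gamma>K rmax) * vG + (cK * h * rmax) * (LG * d) + vK * ((h * d + h\<^sup>2) * \<Gamma>G rmax) + (cG * h * rmax) * (LK * d)"
    proof (rule ar2)
      show "\<bar>KN N \<rho> - KN N (rotate 1 \<rho>) - KN N \<rho>' + KN N (rotate 1 \<rho>')\<bar> \<le> (h * d + h\<^sup>2) * \<Gamma>K rmax"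
        using sa.P2[OF hK N r i h] d_def by simp
      show "\<bar>GN N \<rho> - GN N (rotate 1 \<rho>) - GN N \<rho>' + GN N (rotate 1 \<rho>')\<bar> \<le> (h * d + h\<^sup>2) * \<Gamma>G rmax"
        using sa.P2[OF hG N r i h] d_def by simp
      show "\<bar>KN N \<rho>' - KN N (rotate 1 \<rho>')\<bar> \<le> cK * h * rmax" using K3[OF N r i(2) h] by simp
      show "\<bar>GN N \<rho> - GN N \<rho>'\<bar> \<le> LG * d" using sa.P1[OF hG N r i] d_def by simp
      show "\<bar>GN N \<rho>' - GN N (rotate 1 \<rho>')\<bar> \<le> cG * h * rmax" using G3[OF N r i(2) h] by simp
      show "\<bar>KN N (rotate 1 \<rho>) - KN N (rotate 1 \<rho>')\<bar> \<le> LK * d"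
        using sa.P1[OF hK N r i1] unfolding dv_rotate[OF l] d_def .
      show "\<bar>GN N \<rho>\<bar> \<le> vG" using Gbi[OF N i(1) r(1)] by simp
      show "\<bar>KN N (rotate 1 \<rho>)\<bar> \<le> vK" using Kbi[OF N i1(1) r(1)] by simp
    qed
    moreover have "(cK * h * rmax) * (LG * d) + (cG * h * rmax) * (LK * d) \<le> (cK * LG + cG * LK) * rmax * (h * d + h\<^sup>2)"
    proof -
      have "(cK * h * rmax) * (LG * d) + (cG * h * rmax) * (LK * d) = (cK * LG + cG * LK) * rmax * (h * d)"
        by (simp add: algebra_simps)
      also have "\<dots> \<le> (cK * LG + cG * LK) * rmax * (h * d + h\<^sup>2)"
        using Kc Gc r by (intro mult_left_mono) auto
      finally show ?thesis .
    qed
    ultimately show "\<bar>KN N \<rho> * GN N \<rho> - KN N (rotate 1 \<rho>) * GN N (rotate 1 \<rho>) - KN N \<rho>' * GN N \<rho>' + KN N (rotate 1 \<rho>') * GN N (rotate 1 \<rho>')\<bar>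
      \<le> (h * dv N \<rho> \<rho>' + h\<^sup>2) * (vG * \<Gamma>K rmax + vK * \<Gamma>G rmax + (cK * LG + cG * LK) * rmax)"
      unfolding d_def[symmetric] by (simp add: algebra_simps)
  next
    fix N h rmin rmax \<rho>
    assume N: "N > (2::nat)" and r: "0 < rmin" "rmin \<le> rmax" and i: "inb N rmin rmax \<rho>" and h: "h = 1 / real N"
    have hp: "h \<ge> 0" using h by simp
    have i1: "inb N rmin rmax (rotate 1 \<rho>)" using i inb_rotate by blast+
    have z: "rmin \<le> \<rho> ! 0" "\<rho> ! 0 \<le> rmax" using inb_0[OF _ i] N by auto
    have "-((cK * h * (rmax - \<rho> ! 0)) * vG + vK * (cG * h * (rmax - \<rho> ! 0)))
        \<le> KN N (rotate 1 \<rho>) * GN N (rotate 1 \<rho>) - KN N \<rho> * GN N \<rho> \<and>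
        KN N (rotate 1 \<rho>) * GN N (rotate 1 \<rho>) - KN N \<rho> * GN N \<rho> \<le> (cK * h * (\<rho> ! 0 - rmin)) * vG + vK * (cG * h * (\<rho> ! 0 - rmin))"
      by (rule ar3) (use sa.P3[OF hK N r i h] sa.P3[OF hG N r i h] Kc Gc hp z Kbi[OF N i r(1)] Gbi[OF N i1 r(1)] in auto)
    then show "- (cK * vG + cG * vK) * h * (rmax - \<rho> ! 0) \<le> KN N (rotate 1 \<rho>) * GN N (rotate 1 \<rho>) - KN N \<rho> * GN N \<rho> \<and>
        KN N (rotate 1 \<rho>) * GN N (rotate 1 \<rho>) - KN N \<rho> * GN N \<rho> \<le> (cK * vG + cG * vK) * h * (\<rho> ! 0 - rmin)"
      by (simp add: algebra_simps)
  next
    fix N h rmin rmax \<rho>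
    assume N: "N > (2::nat)" and r: "0 < rmin" "rmin \<le> rmax" and i: "inb N rmin rmax \<rho>" and h: "h = 1 / real N"
    have i1: "inb N rmin rmax (rotate 1 \<rho>)" using i inb_rotate by blast+
    have i2: "inb N rmin rmax (rotate 2 \<rho>)" using i inb_rotate by blast+
    define Y where "Y = yv N h \<rho>"
    have "\<bar>2 * (KN N (rotate 1 \<rho>) * GN N (rotate 1 \<rho>)) - KN N \<rho> * GN N \<rho> - KN N (rotate 2 \<rho>) * GN N (rotate 2 \<rho>)\<bar>
       \<le> vK * (h\<^sup>2 * (\<gamma>G rmax + CG * Y)) + vG * (h\<^sup>2 * (\<gamma>K rmax + CK * Y)) + 2 * ((cK * h * rmax) * (cG * h * rmax))"
    proof (rule ar4)
      show "\<bar>KN N (rotate 1 \<rho>)\<bar> \<le> vK" using Kbi[OF N i1 r(1)] by simp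
      show "\<bar>GN N (rotate 1 \<rho>)\<bar> \<le> vG" using Gbi[OF N i1 r(1)] by simp
      show "\<bar>2 * GN N (rotate 1 \<rho>) - GN N \<rho> - GN N (rotate 2 \<rho>)\<bar> \<le> h\<^sup>2 * (\<gamma>G rmax + CG * Y)"
        using sa.P4[OF hG N r i h] Y_def by simp
      show "\<bar>2 * KN N (rotate 1 \<rho>) - KN N \<rho> - KN N (rotate 2 \<rho>)\<bar> \<le> h\<^sup>2 * (\<gamma>K rmax + CK * Y)"
        using sa.P4[OF hK N r i h] Y_def by simp
      show "\<bar>KN N (rotate 1 \<rho>) - KN N \<rho>\<bar> \<le> cK * h * rmax" by (rule K3[OF N r i h])
      show "\<bar>KN N (rotate 2 \<rho>) - KN N (rotate 1 \<rho>)\<bar> \<le> cK * h * rmax" using K3[OF N r i1 h] unfolding r11 .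
      show "\<bar>GN N (rotate 1 \<rho>) - GN N \<rho>\<bar> \<le> cG * h * rmax" by (rule G3[OF N r i h])
      show "\<bar>GN N (rotate 2 \<rho>) - GN N (rotate 1 \<rho>)\<bar> \<le> cG * h * rmax" using G3[OF N r i1 h] unfolding r11 .
    qed
    then show "\<bar>2 * (KN N (rotate 1 \<rho>) * GN N (rotate 1 \<rho>)) - KN N \<rho> * GN N \<rho> - KN N (rotate 2 \<rho>) * GN N (rotate 2 \<rho>)\<bar>
       \<le> h\<^sup>2 * ((vK * \<gamma>G rmax + vG * \<gamma>K rmax + 2 * (cK * cG) * rmax\<^sup>2) + (vK * CG + vG * CK) * yv N h \<rho>)"
      unfolding Y_def[symmetric] by (simp add: algebra_simps power2_eq_square)
  next
    fix N h rmin rmax \<rho>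
    assume N: "N > (2::nat)" and r: "0 < rmin" "rmin \<le> rmax" and i: "inb N rmin rmax \<rho>" and h: "h = 1 / real N"
    have hp: "h \<ge> 0" using h by simp
    have l: "length \<rho> = N" using i by (simp add: inb_def)
    have i1: "inb N rmin rmax (rotate 1 \<rho>)" using i inb_rotate by blast+
    have i2: "inb N rmin rmax (rotate 2 \<rho>)" using i inb_rotate by blast+
    have i3: "inb N rmin rmax (rotate 3 \<rho>)" using i inb_rotate by blast+
    define Y where "Y = yv N h \<rho>"
    define P where "P = pv N h \<rho>"
    define t where "t = rmax + Y"
    have Yp: "Y \<ge> 0" unfolding Y_def using N by (intro yv_nonneg) auto
    have "\<bar>3 * (KN N (rotate 1 \<rho>) * GN N (rotate 1 \<rho>)) + KN N (rotate 3 \<rho>) * GN N (rotate 3 \<rho>) - KN N \<rho> * GN N \<rho> - 3 * (KN N (rotate 2 \<rho>) * GN N (rotate 2 \<rho>))\<bar>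
       \<le> vK * (h ^ 3 * (WG t + CG * P)) + 3 * ((cK * h * rmax) * (h\<^sup>2 * (\<gamma>G rmax + CG * Y)))
        + 3 * ((h\<^sup>2 * (\<gamma>K rmax + CK * Y)) * (cG * h * rmax)) + (h ^ 3 * (WK t + CK * P)) * vG"
    proof (rule ar5)
      show "\<bar>KN N \<rho>\<bar> \<le> vK" using Kbi[OF N i r(1)] by simp
      show "\<bar>3 * GN N (rotate 1 \<rho>) + GN N (rotate 3 \<rho>) - GN N \<rho> - 3 * GN N (rotate 2 \<rho>)\<bar> \<le> h ^ 3 * (WG t + CG * P)"
        using sa.P5[OF hG N r i h] Y_def P_def t_def by simp
      show "\<bar>KN N (rotate 1 \<rho>) - KN N \<rho>\<bar> \<le> cK * h * rmax" by (rule K3[OF N r i h])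
      show "\<bar>2 * GN N (rotate 2 \<rho>) - GN N (rotate 1 \<rho>) - GN N (rotate 3 \<rho>)\<bar> \<le> h\<^sup>2 * (\<gamma>G rmax + CG * Y)"
        using sa.P4[OF hG N r i1 h] unfolding r11 r21 yv_rotate[OF l] Y_def .
      show "\<bar>2 * KN N (rotate 1 \<rho>) - KN N \<rho> - KN N (rotate 2 \<rho>)\<bar> \<le> h\<^sup>2 * (\<gamma>K rmax + CK * Y)"
        using sa.P4[OF hK N r i h] Y_def by simp
      show "\<bar>GN N (rotate 3 \<rho>) - GN N (rotate 2 \<rho>)\<bar> \<le> cG * h * rmax" using G3[OF N r i2 h] unfolding r12 .
      show "\<bar>3 * KN N (rotate 1 \<rho>) + KN N (rotate 3 \<rho>) - KN N \<rho> - 3 * KN N (rotate 2 \<rho>)\<bar> \<le> h ^ 3 * (WK t + CK * P)"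
        using sa.P5[OF hK N r i h] Y_def P_def t_def by simp
      show "\<bar>GN N (rotate 3 \<rho>)\<bar> \<le> vG" using Gbi[OF N i3 r(1)] by simp
    qed
    moreover have "rmax * (\<gamma>G rmax + CG * Y) \<le> t * (\<gamma>G t + CG * t)"
      using mono_onD[OF Gm(1), of rmax t] Gf[of rmax] Gc r Yp unfolding t_def
      by (intro mult_mono add_mono mult_left_mono) auto
    moreover have "rmax * (\<gamma>K rmax + CK * Y) \<le> t * (\<gamma>K t + CK * t)"
      using mono_onD[OF Km(1), of rmax t] Kf[of rmax] Kc r Yp unfolding t_def
      by (intro mult_mono add_mono mult_left_mono) auto
    ultimately have "\<bar>3 * (KN N (rotate 1 \<rho>) * GN N (rotate 1 \<rho>)) + KN N (rotate 3 \<rho>) * GN N (rotate 3 \<rho>) - KN N \<rho> * GN N \<rho> - 3 * (KN N (rotate 2 \<rho>) * GN N (rotate 2 \<rho>))\<bar>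
       \<le> vK * (h ^ 3 * (WG t + CG * P)) + 3 * cK * h ^ 3 * (t * (\<gamma>G t + CG * t))
        + 3 * cG * h ^ 3 * (t * (\<gamma>K t + CK * t)) + (h ^ 3 * (WK t + CK * P)) * vG"
    proof -
      assume a: "\<bar>3 * (KN N (rotate 1 \<rho>) * GN N (rotate 1 \<rho>)) + KN N (rotate 3 \<rho>) * GN N (rotate 3 \<rho>) - KN N \<rho> * GN N \<rho> - 3 * (KN N (rotate 2 \<rho>) * GN N (rotate 2 \<rho>))\<bar>
       \<le> vK * (h ^ 3 * (WG t + CG * P)) + 3 * ((cK * h * rmax) * (h\<^sup>2 * (\<gamma>G rmax + CG * Y)))
        + 3 * ((h\<^sup>2 * (\<gamma>K rmax + CK * Y)) * (cG * h * rmax)) + (h ^ 3 * (WK t + CK * P)) * vG"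
        and b1: "rmax * (\<gamma>G rmax + CG * Y) \<le> t * (\<gamma>G t + CG * t)"
        and b2: "rmax * (\<gamma>K rmax + CK * Y) \<le> t * (\<gamma>K t + CK * t)"
      have e1: "3 * ((cK * h * rmax) * (h\<^sup>2 * (\<gamma>G rmax + CG * Y))) = (3 * cK * h ^ 3) * (rmax * (\<gamma>G rmax + CG * Y))"
        by (simp add: algebra_simps power2_eq_square power3_eq_cube)
      have e2: "3 * ((h\<^sup>2 * (\<gamma>K rmax + CK * Y)) * (cG * h * rmax)) = (3 * cG * h ^ 3) * (rmax * (\<gamma>K rmax + CK * Y))"
        by (simp add: algebra_simps power2_eq_square power3_eq_cube)
      have f1: "(3 * cK * h ^ 3) * (rmax * (\<gamma>G rmax + CG * Y)) \<le> (3 * cK * h ^ 3) * (t * (\<gamma>G t + CG * t))"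
        using b1 Kc hp by (intro mult_left_mono) auto
      have f2: "(3 * cG * h ^ 3) * (rmax * (\<gamma>K rmax + CK * Y)) \<le> (3 * cG * h ^ 3) * (t * (\<gamma>K t + CK * t))"
        using b2 Gc hp by (intro mult_left_mono) auto
      show ?thesis using a e1 e2 f1 f2 by (simp add: algebra_simps)
    qed
    then show "\<bar>3 * (KN N (rotate 1 \<rho>) * GN N (rotate 1 \<rho>)) + KN N (rotate 3 \<rho>) * GN N (rotate 3 \<rho>) - KN N \<rho> * GN N \<rho> - 3 * (KN N (rotate 2 \<rho>) * GN N (rotate 2 \<rho>))\<bar>
       \<le> h ^ 3 * ((vK * WG (rmax + yv N h \<rho>) + vG * WK (rmax + yv N h \<rho>) + 3 * cK * ((rmax + yv N h \<rho>) * (\<gamma>G (rmax + yv N h \<rho>) + CG * (rmax + yv N h \<rho>))) + 3 * cG * ((rmax + yv N h \<rho>) * (\<gamma>K (rmax + yv N h \<rho>) + CK * (rmax + yv N h \<rho>))))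
         + (vK * CG + vG * CK) * pv N h \<rho>)"
      unfolding t_def[symmetric] Y_def[symmetric] P_def[symmetric] by (simp add: algebra_simps)
  next
    fix N h rmin rmax \<rho> i
    assume N: "N > (2::nat)" and r: "0 < rmin" "rmin \<le> rmax" and inb: "inb N rmin rmax \<rho>" and h: "h = 1 / real N" and iN: "i < N"
    have per: "PN N \<rho> \<in> Per" using inb_pos[OF inb r(1)] N by (intro PN_Per) auto
    have ii: "inb N rmin rmax (rotate i \<rho>)" using inb by (rule inb_rotate)
    have "\<bar>K (PN N \<rho>) (real i * h) * G (PN N \<rho>) (real i * h) - KN N (rotate i \<rho>) * GN N (rotate i \<rho>)\<bar>
       \<le> (h * SK * rmax) * vG + vK * (h * SG * rmax)"
      by (rule ar1) (use Kbi[OF N ii r(1)] sa.vb[OF hG per] sa.P6[OF hK N r inb h iN] sa.P6[OF hG N r inb h iN] in auto)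
    then show "\<bar>K (PN N \<rho>) (real i * h) * G (PN N \<rho>) (real i * h) - KN N (rotate i \<rho>) * GN N (rotate i \<rho>)\<bar>
       \<le> h * (SK * vG + SG * vK) * rmax" by (simp add: algebra_simps)
  qed
qed



lemma sum_sa:
  assumes hK: "sa K KN vK LK cK CK SK \<gamma>K \<Gamma>K WK" and hG: "sa G GN vG LG cG CG SG \<gamma>G \<Gamma>G WG"
  shows "sa (\<lambda>\<rho> x. K \<rho> x + G \<rho> x) (\<lambda>N \<rho>. KN N \<rho> + GN N \<rho>) (vK + vG) (LK + LG)
    (cK + cG) (CK + CG) (SK + SG) (\<lambda>t. \<gamma>K t + \<gamma>G t) (\<lambda>t. \<Gamma>K t + \<Gamma>G t) (\<lambda>t. WK t + WG t)"
proof -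
  note Kc = sa.cs[OF hK] and Gc = sa.cs[OF hG]
  note Kf = sa.fs[OF hK] and Gf = sa.fs[OF hG]
  note Km = sa.ms[OF hK] and Gm = sa.ms[OF hG]
  show ?thesis
  proof (rule sa.intro)
    show "\<forall>\<rho>\<in>Per. continuous_on UNIV (\<lambda>x. K \<rho> x + G \<rho> x) \<and> (\<forall>x. K \<rho> (x + 1) + G \<rho> (x + 1) = K \<rho> x + G \<rho> x)"
      using sa.cont[OF hK] sa.cont[OF hG] by (auto intro: continuous_on_add)
    show "sup_continuous_on_Per (\<lambda>\<rho> x. K \<rho> x + G \<rho> x)"
      by (rule sc_sum[OF sa.sc[OF hK] sa.sc[OF hG]])
    show "\<And>N \<rho>. N > 2 \<Longrightarrow> length \<rho> = N \<Longrightarrow> 0 \<le> KN N \<rho> + GN N \<rho>"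
      using sa.nn[OF hK] sa.nn[OF hG] by (simp add: add_nonneg_nonneg)
    show "vK + vG > 0" using sa.vpos[OF hK] sa.vpos[OF hG] by simp
    show "\<And>\<rho> x. \<rho> \<in> Per \<Longrightarrow> 0 \<le> K \<rho> x + G \<rho> x \<and> K \<rho> x + G \<rho> x \<le> vK + vG"
    proof -
      fix \<rho> x assume p: "\<rho> \<in> Per"
      show "0 \<le> K \<rho> x + G \<rho> x \<and> K \<rho> x + G \<rho> x \<le> vK + vG"
        using sa.vb[OF hK p, of x] sa.vb[OF hG p, of x] by simp
    qed
    show "LK + LG \<ge> 0" "cK + cG \<ge> 0" "CK + CG \<ge> 0" "SK + SG \<ge> 0" using Kc Gc by auto
    show "\<And>t. t \<ge> 0 \<Longrightarrow> \<gamma>K t + \<gamma>G t \<ge> 0 \<and> \<Gamma>K t + \<Gamma>G t \<ge> 0 \<and> WK t + WG t \<ge> 0"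
      using Kf Gf by (simp add: add_nonneg_nonneg)
    show "mono_on {0..} (\<lambda>t. \<gamma>K t + \<gamma>G t)" "mono_on {0..} (\<lambda>t. \<Gamma>K t + \<Gamma>G t)" "mono_on {0..} (\<lambda>t. WK t + WG t)"
      by (rule mono_onI, rule add_mono, erule (2) mono_onD[OF Km(1)], erule (2) mono_onD[OF Gm(1)])
         (rule mono_onI, rule add_mono, erule (2) mono_onD[OF Km(2)], erule (2) mono_onD[OF Gm(2)],
          rule mono_onI, rule add_mono, erule (2) mono_onD[OF Km(3)], erule (2) mono_onD[OF Gm(3)])
    show "\<And>N \<rho>. N > 2 \<Longrightarrow> length \<rho> = N \<Longrightarrow> (\<forall>j<N. \<rho> ! j \<ge> 0) \<Longrightarrow> KN N \<rho> + GN N \<rho> \<le> vK + vG"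
      using sa.ub[OF hK] sa.ub[OF hG] by (simp add: add_mono)
  next
    fix N rmin rmax \<rho> \<rho>'
    assume N: "N > (2::nat)" and r: "0 < rmin" "rmin \<le> rmax" and i: "inb N rmin rmax \<rho>" "inb N rmin rmax \<rho>'"
    show "\<bar>KN N \<rho> + GN N \<rho> - (KN N \<rho>' + GN N \<rho>')\<bar> \<le> (LK + LG) * dv N \<rho> \<rho>'"
      using sa.P1[OF hK N r i] sa.P1[OF hG N r i] by (simp add: algebra_simps; smt (verit))
  next
    fix N h rmin rmax \<rho> \<rho>'
    assume N: "N > (2::nat)" and r: "0 < rmin" "rmin \<le> rmax" and i: "inb N rmin rmax \<rho>" "inb N rmin rmax \<rho>'"
      and h: "h = 1 / real N"
    show "\<bar>KN N \<rho> + GN N \<rho> - (KN N (rotate 1 \<rho>) + GN N (rotate 1 \<rho>)) - (KN N \<rho>' + GN N \<rho>') + (KN N (rotate 1 \<rho>') + GN N (rotate 1 \<rho>'))\<bar>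
      \<le> (h * dv N \<rho> \<rho>' + h\<^sup>2) * (\<Gamma>K rmax + \<Gamma>G rmax)"
      using sa.P2[OF hK N r i h] sa.P2[OF hG N r i h] by (simp add: algebra_simps; smt (verit))
  next
    fix N h rmin rmax \<rho>
    assume N: "N > (2::nat)" and r: "0 < rmin" "rmin \<le> rmax" and i: "inb N rmin rmax \<rho>" and h: "h = 1 / real N"
    show "- (cK + cG) * h * (rmax - \<rho> ! 0) \<le> KN N (rotate 1 \<rho>) + GN N (rotate 1 \<rho>) - (KN N \<rho> + GN N \<rho>) \<and>
        KN N (rotate 1 \<rho>) + GN N (rotate 1 \<rho>) - (KN N \<rho> + GN N \<rho>) \<le> (cK + cG) * h * (\<rho> ! 0 - rmin)"
      using sa.P3[OF hK N r i h] sa.P3[OF hG N r i h] by (simp add: algebra_simps)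
  next
    fix N h rmin rmax \<rho>
    assume N: "N > (2::nat)" and r: "0 < rmin" "rmin \<le> rmax" and i: "inb N rmin rmax \<rho>" and h: "h = 1 / real N"
    show "\<bar>2 * (KN N (rotate 1 \<rho>) + GN N (rotate 1 \<rho>)) - (KN N \<rho> + GN N \<rho>) - (KN N (rotate 2 \<rho>) + GN N (rotate 2 \<rho>))\<bar>
       \<le> h\<^sup>2 * (\<gamma>K rmax + \<gamma>G rmax + (CK + CG) * yv N h \<rho>)"
      using sa.P4[OF hK N r i h] sa.P4[OF hG N r i h] by (simp add: algebra_simps; smt (verit))
  next
    fix N h rmin rmax \<rho>
    assume N: "N > (2::nat)" and r: "0 < rmin" "rmin \<le> rmax" and i: "inb N rmin rmax \<rho>" and h: "h = 1 / real N"
    show "\<bar>3 * (KN N (rotate 1 \<rho>) + GN N (rotate 1 \<rho>)) + (KN N (rotate 3 \<rho>) + GN N (rotate 3 \<rho>)) - (KN N \<rho> + GN N \<rho>) - 3 * (KN N (rotate 2 \<rho>) + GN N (rotate 2 \<rho>))\<bar>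
       \<le> h ^ 3 * (WK (rmax + yv N h \<rho>) + WG (rmax + yv N h \<rho>) + (CK + CG) * pv N h \<rho>)"
      using sa.P5[OF hK N r i h] sa.P5[OF hG N r i h] by (simp add: algebra_simps; smt (verit))
  next
    fix N h rmin rmax \<rho> i
    assume N: "N > (2::nat)" and r: "0 < rmin" "rmin \<le> rmax" and inb: "inb N rmin rmax \<rho>" and h: "h = 1 / real N" and iN: "i < N"
    show "\<bar>K (PN N \<rho>) (real i * h) + G (PN N \<rho>) (real i * h) - (KN N (rotate i \<rho>) + GN N (rotate i \<rho>))\<bar>
       \<le> h * (SK + SG) * rmax"
      using sa.P6[OF hK N r inb h iN] sa.P6[OF hG N r inb h iN] by (simp add: algebra_simps; smt (verit))
  qed
qed

lemma const_sa:
  assumes "lam \<ge> (0::real)"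
  shows "sa (\<lambda>\<rho> x. lam) (\<lambda>N \<rho>. lam) (lam + 1) 0 0 0 0 (\<lambda>t. 0) (\<lambda>t. 0) (\<lambda>t. 0)"
proof (rule sa.intro)
  show "sup_continuous_on_Per (\<lambda>\<rho> x. lam)"
    unfolding sup_continuous_on_Per_def by (auto intro: exI[of _ 1])
qed (use assms in \<open>auto simp: mono_on_def\<close>)


theorem lemma2p2:
  fixes K G :: "(real \<Rightarrow> real) \<Rightarrow> (real \<Rightarrow> real)"
    and KN GN :: "nat \<Rightarrow> real list \<Rightarrow> real"
    and lam :: real
  assumes "\<forall>\<rho>\<in>Per. K \<rho> \<in> Per" and "\<forall>\<rho>\<in>Per. G \<rho> \<in> Per"
    and "smooth_approx K KN" and "smooth_approx G GN"
    and "lam \<ge> 0"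
  shows "smooth_approx (\<lambda>\<rho> x. K \<rho> x * G \<rho> x) (\<lambda>N \<rho>. KN N \<rho> * GN N \<rho>)
       \<and> smooth_approx (\<lambda>\<rho> x. K \<rho> x + G \<rho> x) (\<lambda>N \<rho>. KN N \<rho> + GN N \<rho>)
       \<and> smooth_approx (\<lambda>\<rho> x. lam * K \<rho> x) (\<lambda>N \<rho>. lam * KN N \<rho>)"
proof -
  obtain vK LK cK CK SK \<gamma>K \<Gamma>K WK where hK: "sa K KN vK LK cK CK SK \<gamma>K \<Gamma>K WK"
    by (rule sa_from[OF assms(3)])
  obtain vG LG cG CG SG \<gamma>G \<Gamma>G WG where hG: "sa G GN vG LG cG CG SG \<gamma>G \<Gamma>G WG"
    by (rule sa_from[OF assms(4)])
  have hC: "sa (\<lambda>\<rho> x. lam) (\<lambda>N \<rho>. lam) (lam + 1) 0 0 0 0 (\<lambda>t. 0) (\<lambda>t. 0) (\<lambda>t. 0)"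
    by (rule const_sa[OF assms(5)])
  have 1: "smooth_approx (\<lambda>\<rho> x. K \<rho> x * G \<rho> x) (\<lambda>N \<rho>. KN N \<rho> * GN N \<rho>)"
    by (rule sa_to[OF prod_sa[OF hK hG]])
  have 2: "smooth_approx (\<lambda>\<rho> x. K \<rho> x + G \<rho> x) (\<lambda>N \<rho>. KN N \<rho> + GN N \<rho>)"
    by (rule sa_to[OF sum_sa[OF hK hG]])
  have 3: "smooth_approx (\<lambda>\<rho> x. lam * K \<rho> x) (\<lambda>N \<rho>. lam * KN N \<rho>)"
    by (rule sa_to[OF prod_sa[OF hC hK]])
  show ?thesis using 1 2 3 by blast
qed

end
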